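(* For every graph $G$, every spanning forest $T$ of $G$, and every edge $f_0\in E(T)$, there exists a coloring $\varphi: C^*(T,f_0)\setminus\{f_0\}\to\{1,\dots,9\}$ such that for every edge $f\in E(T)$ with $C^*(T,f)\cap(C^*(T,f_0)\setminus\{f_0\})\neq\emptyset$ there exists a color $i\in\{1,\dots,8\}$ which occurs an odd number of times on $C^*(T,f)\cap(C^*(T,f_0)\setminus\{f_0\})$.
   Context: A spanning forest of $G$ is a maximal acyclic subgraph. For a spanning forest $T$ of $G$ and $f\in E(T)$, deleting $f$ from $T$ splits the component of $T$ containing $f$ into two components; the fundamental cut $C^*(T,f)$ is the set of all edges of $G$ joining the vertex sets of these two components (in particular $f\in C^*(T,f)$). *)

theory Defs
  imports Main
begin

text \<open>A finite graph (multigraph; parallel edges and loops allowed) is given by a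
vertex set V, an edge set E and an incidence map ends assigning to each edge
its set of one (loop) or two end vertices.\<close>

definition graph :: "'v set \<Rightarrow> 'e set \<Rightarrow> ('e \<Rightarrow> 'v set) \<Rightarrow> bool" where
  "graph V E ends \<longleftrightarrow> finite V \<and> finite E \<and>
     (\<forall>e\<in>E. ends e \<subseteq> V \<and> (card (ends e) = 1 \<or> card (ends e) = 2))"

definition is_cycle :: "('e \<Rightarrow> 'v set) \<Rightarrow> 'e set \<Rightarrow> 'v list \<Rightarrow> 'e list \<Rightarrow> bool" where
  "is_cycle ends F vs es \<longleftrightarrow> length vs = length es \<and> length es \<ge> 1 \<and>
     distinct vs \<and> distinct es \<and> set es \<subseteq> F \<and>
     (\<forall>i < length es. ends (es ! i) = {vs ! i, vs ! ((i + 1) mod length vs)})"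

definition acyclic_edges :: "('e \<Rightarrow> 'v set) \<Rightarrow> 'e set \<Rightarrow> bool" where
  "acyclic_edges ends F \<longleftrightarrow> \<not> (\<exists>vs es. is_cycle ends F vs es)"

definition spanning_forest :: "'v set \<Rightarrow> 'e set \<Rightarrow> ('e \<Rightarrow> 'v set) \<Rightarrow> 'e set \<Rightarrow> bool" where
  "spanning_forest V E ends T \<longleftrightarrow> T \<subseteq> E \<and> acyclic_edges ends T \<and>
     (\<forall>e \<in> E - T. \<not> acyclic_edges ends (insert e T))"

definition adj_rel :: "('e \<Rightarrow> 'v set) \<Rightarrow> 'e set \<Rightarrow> ('v \<times> 'v) set" where
  "adj_rel ends F = {(u, w). \<exists>e \<in> F. ends e = {u, w}}"

definition component :: "'v set \<Rightarrow> ('e \<Rightarrow> 'v set) \<Rightarrow> 'e set \<Rightarrow> 'v \<Rightarrow> 'v set" where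
  "component V ends F x = {y \<in> V. (x, y) \<in> (adj_rel ends F)\<^sup>*}"

definition fund_cut :: "'v set \<Rightarrow> 'e set \<Rightarrow> ('e \<Rightarrow> 'v set) \<Rightarrow> 'e set \<Rightarrow> 'e \<Rightarrow> 'e set" where
  "fund_cut V E ends T f = {e \<in> E. \<exists>u w a b. ends f = {u, w} \<and>
      a \<in> component V ends (T - {f}) u \<and> b \<in> component V ends (T - {f}) w \<and>
      ends e = {a, b}}"

end

theory Submission
  imports Defs "HOL-Library.Z2" "HOL-Library.Product_Plus"
begin

type_synonym bb = "bit \<times> bit"

lemma bit_add_self [simp]: "(x::bit) + x = 0"
  by (cases x) simp_all

lemma bb_add_self [simp]: "(v::bb) + v = 0"
  by (cases v) (simp add: zero_prod_def)

lemma bb_cases: "(v::bb) = (0,0) \<or> v = (1,0) \<or> v = (0,1) \<or> v = (1,1)"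
  by (cases v) (metis bit_not_zero_iff)

lemma bb_zero: "(0::bb) = (0,0)" by (simp add: zero_prod_def)

lemma bb_eq_iff_add: "((t::bb) + s = 0) \<longleftrightarrow> t = s"
  by (metis add.assoc add.right_neutral bb_add_self)

lemma sum_const_bb: "finite S \<Longrightarrow> sum (\<lambda>_. v) S = (if odd (card S) then (v::bb) else 0)"
  by (induction S rule: finite_induct) auto

lemma of_nat_bit: "(of_nat n :: bit) = (if odd n then 1 else 0)"
  by (induction n) auto

lemma sum_const_bit: "finite S \<Longrightarrow> sum (\<lambda>_. v) S = (if odd (card S) then (v::bit) else 0)"
  by (simp add: of_nat_bit)

lemma oddsum:
  assumes "finite S" "\<forall>x\<in>S. c x = ((1::bit),(0::bit)) \<or> c x = (0,1)" "odd (card S)"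
  shows "sum c S \<noteq> 0"
proof
  assume h: "sum c S = 0"
  have "fst (sum c S) + snd (sum c S) = (\<Sum>x\<in>S. fst (c x) + snd (c x))"
    by (simp only: fst_sum snd_sum sum.distrib)
  also have "\<dots> = (\<Sum>x\<in>S. (1::bit))"
    using assms(2) by (intro sum.cong) auto
  also have "\<dots> = 1" by (simp only: sum_const_bit[OF assms(1)]) (simp add: assms(3))
  finally show False using h by (simp add: zero_prod_def)
qed

definition laminar :: "'a set set \<Rightarrow> bool" where
  "laminar L \<longleftrightarrow> (\<forall>S\<in>L. \<forall>T\<in>L. S \<subseteq> T \<or> T \<subseteq> S \<or> S \<inter> T = {})"

definition good :: "'a set \<Rightarrow> 'a set set \<Rightarrow> 'a set \<Rightarrow> ('a \<Rightarrow> bb) \<Rightarrow> bool" where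
  "good B L P c \<longleftrightarrow> (\<forall>x\<in>P. c x \<noteq> 0 \<and> (x \<in> B \<longrightarrow> c x \<noteq> (1,1))) \<and>
     (\<forall>S\<in>L. S \<subseteq> P \<longrightarrow> sum c S \<noteq> 0)"

lemma good_combine:
  assumes "P \<inter> Q = {}" "good B L P c1" "good B L Q c2"
    "\<forall>S\<in>L. S \<subseteq> P \<union> Q \<longrightarrow> S \<subseteq> P \<or> S \<subseteq> Q"
  shows "good B L (P \<union> Q) (\<lambda>x. if x \<in> P then c1 x else c2 x)"
proof -
  have "sum (\<lambda>x. if x \<in> P then c1 x else c2 x) S \<noteq> 0" if "S \<in> L" "S \<subseteq> P \<union> Q" for S
  proof (cases "S \<subseteq> P")
    case True
    then have "sum (\<lambda>x. if x \<in> P then c1 x else c2 x) S = sum c1 S"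
      by (intro sum.cong) auto
    then show ?thesis using assms(2) that True unfolding good_def by auto
  next
    case False
    then have Q: "S \<subseteq> Q" using assms(4) that by blast
    then have "sum (\<lambda>x. if x \<in> P then c1 x else c2 x) S = sum c2 S"
      using assms(1) by (intro sum.cong) auto
    then show ?thesis using assms(3) that Q unfolding good_def by auto
  qed
  then show ?thesis using assms(1-3) unfolding good_def by auto
qed

lemma sum_combine:
  assumes "finite P" "finite Q" "P \<inter> Q = {}"
  shows "sum (\<lambda>x. if x \<in> P then c1 x else c2 x) (P \<union> Q) = sum c1 P + (sum c2 Q :: bb)"
proof -
  have "sum (\<lambda>x. if x \<in> P then c1 x else c2 x) (P \<union> Q) =
        sum (\<lambda>x. if x \<in> P then c1 x else c2 x) P + sum (\<lambda>x. if x \<in> P then c1 x else c2 x) Q"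
    using assms by (simp add: sum.union_disjoint)
  also have "sum (\<lambda>x. if x \<in> P then c1 x else c2 x) P = sum c1 P" by (intro sum.cong) auto
  also have "sum (\<lambda>x. if x \<in> P then c1 x else c2 x) Q = sum c2 Q"
    using assms(3) by (intro sum.cong) auto
  finally show ?thesis .
qed

lemma good_inB:
  assumes "finite Q" "Q \<subseteq> B" "\<forall>S\<in>L. S \<subseteq> B \<longrightarrow> odd (card S)"
    "\<forall>x\<in>Q. c x = (1,0) \<or> c x = (0,1)"
  shows "good B L Q c"
  unfolding good_def
proof (intro conjI ballI impI)
  fix x assume "x \<in> Q"
  then show "c x \<noteq> 0" using assms(4) by (auto simp: zero_prod_def)
next
  fix x assume "x \<in> Q" "x \<in> B" then show "c x \<noteq> (1,1)" using assms(4) by auto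
next
  fix S assume S: "S \<in> L" "S \<subseteq> Q"
  then show "sum c S \<noteq> 0"
    using assms by (intro oddsum) (auto intro: finite_subset)
qed

lemma bb_cancel1: "(p::bb) + (t + p) = t"
  by (simp add: add.left_commute[of p t p])

lemma bb_cancel2: "((t::bb) + s) + s = t"
  by (simp add: add.assoc)

lemma two_vals: "t \<noteq> (0::bb) \<Longrightarrow> \<exists>p. (p = (1,0) \<or> p = (0,1)) \<and> p \<noteq> t"
  by auto

lemma R_main:
  assumes "finite U" "laminar L" "{} \<notin> L" "\<forall>S\<in>L. S \<subseteq> B \<longrightarrow> odd (card S)"
    "\<not> U \<subseteq> B" "t \<noteq> 0"
  shows "\<exists>c. good B L U c \<and> sum c U = t"
  using assms
proof (induction "card U + card {S\<in>L. S \<subseteq> U}" arbitrary: U L t rule: less_induct)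
  case less
  have finL: "finite {S\<in>L. S \<subseteq> U}" using finite_subset[of "{S\<in>L. S \<subseteq> U}" "Pow U"] less.prems(1) by auto
  show ?case
  proof (cases "U \<in> L")
    case True
    have sub: "{S\<in>L - {U}. S \<subseteq> U} \<subset> {S\<in>L. S \<subseteq> U}" using True by auto
    then have lt: "card {S\<in>L - {U}. S \<subseteq> U} < card {S\<in>L. S \<subseteq> U}"
      using finL by (rule psubset_card_mono[rotated])
    have lam: "laminar (L - {U})" using less.prems(2) unfolding laminar_def by blast
    have "\<exists>c. good B (L - {U}) U c \<and> sum c U = t"
    proof (rule less.hyps[of U "L - {U}" t])
      show "card U + card {S\<in>L - {U}. S \<subseteq> U} < card U + card {S\<in>L. S \<subseteq> U}" using lt by simp
    qed (use less.prems lam in auto)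
    then obtain c where c: "good B (L - {U}) U c" "sum c U = t" by blast
    then have "good B L U c" using less.prems(6) unfolding good_def by auto
    then show ?thesis using c by auto
  next
    case UL: False
    obtain P where P: "P \<subseteq> U" "P \<noteq> {}" "\<forall>S\<in>L. S \<subseteq> U \<longrightarrow> S \<subseteq> P \<or> S \<subseteq> U - P"
      and Pach: "\<not> P \<subseteq> B \<Longrightarrow> (\<forall>t'. t' \<noteq> 0 \<longrightarrow> (\<exists>c. good B L P c \<and> sum c P = t'))"
      and PB: "P \<subseteq> B \<Longrightarrow> P \<in> L"
    proof (cases "{S\<in>L. S \<subseteq> U} = {}")
      case True
      obtain x where x: "x \<in> U" "x \<notin> B" using less.prems(5) by auto
      show ?thesis
      proof (rule that[of "{x}"])
        show "{x} \<subseteq> U" "{x} \<noteq> {}" using x by auto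
        show "\<forall>S\<in>L. S \<subseteq> U \<longrightarrow> S \<subseteq> {x} \<or> S \<subseteq> U - {x}" using True by auto
        show "\<forall>t'. t' \<noteq> 0 \<longrightarrow> (\<exists>c. good B L {x} c \<and> sum c {x} = t')"
        proof (intro allI impI)
          fix t' :: bb assume "t' \<noteq> 0"
          moreover have "\<forall>S\<in>L. \<not> S \<subseteq> {x}" using True x less.prems(3) by blast
          ultimately have "good B L {x} (\<lambda>_. t')" using x unfolding good_def by auto
          then show "\<exists>c. good B L {x} c \<and> sum c {x} = t'" by auto
        qed
        show "{x} \<subseteq> B \<Longrightarrow> {x} \<in> L" using x by auto
      qed
    next
      case False
      obtain M where M: "M \<in> {S\<in>L. S \<subseteq> U}" "\<forall>S\<in>{S\<in>L. S \<subseteq> U}. M \<subseteq> S \<longrightarrow> M = S"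
        using finite_has_maximal[OF finL False] by blast
      have MU: "M \<subset> U" using M UL by auto
      show ?thesis
      proof (rule that[of M])
        show "M \<subseteq> U" using MU by auto
        show "M \<noteq> {}" using M less.prems(3) by auto
        show "\<forall>S\<in>L. S \<subseteq> U \<longrightarrow> S \<subseteq> M \<or> S \<subseteq> U - M"
        proof (intro ballI impI)
          fix S assume S: "S \<in> L" "S \<subseteq> U"
          have "S \<subseteq> M \<or> M \<subseteq> S \<or> S \<inter> M = {}" using less.prems(2) S M unfolding laminar_def by auto
          then show "S \<subseteq> M \<or> S \<subseteq> U - M" using M S by auto
        qed
        show "\<forall>t'. t' \<noteq> 0 \<longrightarrow> (\<exists>c. good B L M c \<and> sum c M = t')" if "\<not> M \<subseteq> B"
        proof (intro allI impI)
          fix t' :: bb assume t': "t' \<noteq> 0"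
          have cM: "card M < card U" using MU less.prems(1) by (simp add: psubset_card_mono)
          have "{S\<in>L. S \<subseteq> M} \<subseteq> {S\<in>L. S \<subseteq> U}" using MU by auto
          then have "card {S\<in>L. S \<subseteq> M} \<le> card {S\<in>L. S \<subseteq> U}" using finL by (rule card_mono[rotated])
          with cM show "\<exists>c. good B L M c \<and> sum c M = t'"
            apply (intro less.hyps[of M L t'])
            using less.prems that t' MU finite_subset[of M U] by auto
        qed
        show "M \<subseteq> B \<Longrightarrow> M \<in> L" using M by auto
      qed
    qed
    define Q where "Q = U - P"
    have PQ: "P \<inter> Q = {}" "U = P \<union> Q" using P(1) unfolding Q_def by auto
    have finP: "finite P" and finQ: "finite Q" using P(1) less.prems(1) unfolding Q_def by (auto intro: finite_subset)
    have split: "\<forall>S\<in>L. S \<subseteq> P \<union> Q \<longrightarrow> S \<subseteq> P \<or> S \<subseteq> Q" using P(3) PQ unfolding Q_def by auto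
    have IHQ: "\<exists>c. good B L Q c \<and> sum c Q = s" if "\<not> Q \<subseteq> B" "s \<noteq> 0" for s
    proof -
      have "card P > 0" using P(1,2) less.prems(1) finite_subset[of P U] by auto
      moreover have "card Q = card U - card P" unfolding Q_def using P(1) less.prems(1) finite_subset[of P U]
        by (simp add: card_Diff_subset)
      moreover have "card P \<le> card U" using P(1) less.prems(1) by (simp add: card_mono)
      ultimately have cQ: "card Q < card U" by linarith
      have "{S\<in>L. S \<subseteq> Q} \<subseteq> {S\<in>L. S \<subseteq> U}" unfolding Q_def by auto
      then have "card {S\<in>L. S \<subseteq> Q} \<le> card {S\<in>L. S \<subseteq> U}" using finL by (rule card_mono[rotated])
      with cQ show ?thesis
        apply (intro less.hyps[of Q L s])
        using less.prems that finQ by auto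
    qed
    show ?thesis
    proof (cases "P \<subseteq> B")
      case True
      then have PL: "P \<in> L" using PB by auto
      have oddP: "odd (card P)" using PL True less.prems(4) by auto
      have QB: "\<not> Q \<subseteq> B" using less.prems(5) True PQ by auto
      obtain p where p: "p = (1,0) \<or> p = (0,1)" "p \<noteq> t" using two_vals[OF less.prems(6)] by auto
      have gP: "good B L P (\<lambda>_. p)" using good_inB[OF finP True less.prems(4)] p by auto
      have sP: "sum (\<lambda>_. p) P = p" using sum_const_bb[OF finP] oddP by simp
      have tp: "t + p \<noteq> 0" using p bb_eq_iff_add by auto
      obtain cQ where cQ: "good B L Q cQ" "sum cQ Q = t + p" using IHQ[OF QB tp] by blast
      have g: "good B L U (\<lambda>x. if x \<in> P then p else cQ x)"
        using good_combine[OF PQ(1) gP cQ(1) split] PQ(2) by simp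
      have "sum (\<lambda>x. if x \<in> P then p else cQ x) U = p + (t + p)"
        using sum_combine[OF finP finQ PQ(1), of "\<lambda>_. p" cQ] sP cQ(2) PQ(2) by simp
      also have "\<dots> = t" by (rule bb_cancel1)
      finally show ?thesis using g by blast
    next
      case PnB: False
      have "\<exists>s cQ. good B L Q cQ \<and> sum cQ Q = s \<and> s \<noteq> t"
      proof (cases "Q = {}")
        case True
        then have "good B L Q (\<lambda>_. 0)" using less.prems(3) unfolding good_def by auto
        then show ?thesis using True less.prems(6) by auto
      next
        case Qne: False
        show ?thesis
        proof (cases "Q \<subseteq> B")
          case True
          obtain q0 where q0: "q0 \<in> Q" using Qne by auto
          define c1 where "c1 = (\<lambda>_::'a. ((1::bit),(0::bit)))"
          define c2 where "c2 = (\<lambda>y. if y = q0 then ((0::bit),(1::bit)) else (1,0))"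
          have g1: "good B L Q c1" using good_inB[OF finQ True less.prems(4)] unfolding c1_def by auto
          have g2: "good B L Q c2" using good_inB[OF finQ True less.prems(4)] unfolding c2_def by auto
          have e2: "sum c2 Q = sum c2 (Q - {q0}) + c2 q0" using q0 finQ by (simp add: sum.remove add.commute)
          have e3: "sum c2 (Q - {q0}) = sum c1 (Q - {q0})" unfolding c1_def c2_def by (intro sum.cong) auto
          have e1: "sum c1 Q = sum c1 (Q - {q0}) + c1 q0" using q0 finQ by (simp add: sum.remove add.commute)
          have "sum c1 Q + sum c2 Q = c1 q0 + c2 q0"
            unfolding e1 e2 e3 by (simp add: algebra_simps)
          also have "\<dots> = (1,1)" unfolding c1_def c2_def by simp
          finally have "sum c1 Q + sum c2 Q \<noteq> 0" by (simp add: zero_prod_def)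
          then have "sum c1 Q \<noteq> sum c2 Q" by auto
          then show ?thesis using g1 g2 by metis
        next
          case False
          obtain s where s: "s = (1,0) \<or> s = (0,1)" "s \<noteq> t" using two_vals[OF less.prems(6)] by auto
          then have "s \<noteq> 0" by (auto simp: zero_prod_def)
          then show ?thesis using IHQ[OF False] s by blast
        qed
      qed
      then obtain s cQ where cQ: "good B L Q cQ" "sum cQ Q = s" "s \<noteq> t" by blast
      have "t + s \<noteq> 0" using cQ(3) bb_eq_iff_add by auto
      then obtain cP where cP: "good B L P cP" "sum cP P = t + s" using Pach PnB by blast
      have g: "good B L U (\<lambda>x. if x \<in> P then cP x else cQ x)"
        using good_combine[OF PQ(1) cP(1) cQ(1) split] PQ(2) by simp
      have "sum (\<lambda>x. if x \<in> P then cP x else cQ x) U = (t + s) + s"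
        using sum_combine[OF finP finQ PQ(1), of cP cQ] cP(2) cQ(2) PQ(2) by simp
      also have "\<dots> = t" by (rule bb_cancel2)
      finally show ?thesis using g by blast
    qed
  qed
qed

lemma part_lemma:
  assumes "finite D" "\<forall>E\<in>EE. E \<subseteq> D \<and> 2 \<le> card E" "\<forall>F\<in>FF. F \<subseteq> D \<and> 2 \<le> card F"
    "\<forall>E1\<in>EE. \<forall>E2\<in>EE. E1 \<noteq> E2 \<longrightarrow> E1 \<inter> E2 = {}"
    "\<forall>F1\<in>FF. \<forall>F2\<in>FF. F1 \<noteq> F2 \<longrightarrow> F1 \<inter> F2 = {}"
  shows "\<exists>Y\<subseteq>D. (\<forall>E\<in>EE. E \<inter> Y \<noteq> {}) \<and> (\<forall>F\<in>FF. \<not> F \<subseteq> Y)"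
  using assms
proof (induction "card D" arbitrary: D EE FF rule: less_induct)
  case less
  note finD = less.prems(1) and EEp = less.prems(2) and FFp = less.prems(3)
    and dE = less.prems(4) and dF = less.prems(5)
  have Fne: "F \<noteq> {}" if "F \<in> FF" for F using FFp that by fastforce
  show ?case
  proof (cases "EE = {}")
    case True
    then show ?thesis using Fne by (intro exI[of _ "{}"]) auto
  next
    case False
    then obtain E0 where E0: "E0 \<in> EE" by auto
    have E0D: "E0 \<subseteq> D" and cE0: "2 \<le> card E0" using EEp E0 by auto
    have finE0: "finite E0" using E0D finD finite_subset by auto
    then obtain x where x: "x \<in> E0" using cE0 by fastforce
    have cardlt: "card (D - A) < card D" if "A \<subseteq> D" "a \<in> A" for A a
    proof -
      have fA: "finite A" using that(1) finD finite_subset by auto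
      then have "card A > 0" using that(2) card_gt_0_iff by auto
      moreover have "card (D - A) = card D - card A" using that(1) fA by (simp add: card_Diff_subset)
      moreover have "card A \<le> card D" using that(1) finD by (simp add: card_mono)
      ultimately show ?thesis by linarith
    qed
    show ?thesis
    proof (cases "\<forall>F\<in>FF. x \<in> F \<longrightarrow> F \<inter> (E0 - {x}) \<noteq> {}")
      case C1: True
      let ?D = "D - E0" and ?E = "EE - {E0}" and ?F = "{F\<in>FF. F \<inter> E0 = {}}"
      have "\<exists>Y\<subseteq>?D. (\<forall>E\<in>?E. E \<inter> Y \<noteq> {}) \<and> (\<forall>F\<in>?F. \<not> F \<subseteq> Y)"
      proof (rule less.hyps)
        show "card ?D < card D" using cardlt[OF E0D x] .
        show "\<forall>E\<in>?E. E \<subseteq> ?D \<and> 2 \<le> card E" using EEp dE E0 by blast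
      qed (use finD FFp dE dF in auto)
      then obtain Y where Y: "Y \<subseteq> ?D" "\<forall>E\<in>?E. E \<inter> Y \<noteq> {}" "\<forall>F\<in>?F. \<not> F \<subseteq> Y" by blast
      show ?thesis
      proof (intro exI[of _ "insert x Y"] conjI ballI)
        show "insert x Y \<subseteq> D" using Y(1) x E0D by auto
        fix E assume "E \<in> EE" then show "E \<inter> insert x Y \<noteq> {}" using Y(2) x by (cases "E = E0") auto
      next
        fix F assume F: "F \<in> FF"
        show "\<not> F \<subseteq> insert x Y"
        proof (cases "F \<inter> E0 = {}")
          case True then show ?thesis using Y(3) F x by auto
        next
          case False
          then obtain y where y: "y \<in> F" "y \<in> E0" by auto
          show ?thesis
          proof (cases "y = x")
            case True
            then obtain z where "z \<in> F" "z \<in> E0" "z \<noteq> x" using C1 F y by auto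
            then show ?thesis using Y(1) by auto
          next
            case False then show ?thesis using y Y(1) by auto
          qed
        qed
      qed
    next
      case False
      then obtain F0 where F0: "F0 \<in> FF" "x \<in> F0" "F0 \<inter> (E0 - {x}) = {}" by auto
      have F0E0: "F0 \<inter> E0 = {x}" using F0 x by auto
      have F0D: "F0 \<subseteq> D" and cF0: "2 \<le> card F0" using FFp F0 by auto
      have finF0: "finite F0" using F0D finD finite_subset by auto
      have Fx: "F = F0" if "F \<in> FF" "x \<in> F" for F using dF that F0 by blast
      show ?thesis
      proof (cases "3 \<le> card F0")
        case True
        let ?D = "D - E0" and ?E = "EE - {E0}" and ?F = "insert (F0 - {x}) {F\<in>FF. F \<inter> E0 = {}}"
        have "\<exists>Y\<subseteq>?D. (\<forall>E\<in>?E. E \<inter> Y \<noteq> {}) \<and> (\<forall>F\<in>?F. \<not> F \<subseteq> Y)"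
        proof (rule less.hyps)
          show "card ?D < card D" using cardlt[OF E0D x] .
          show "\<forall>E\<in>?E. E \<subseteq> ?D \<and> 2 \<le> card E" using EEp dE E0 by blast
          have "card (F0 - {x}) = card F0 - 1" using F0(2) finF0 by simp
          then have "2 \<le> card (F0 - {x})" using True by simp
          then show "\<forall>F\<in>?F. F \<subseteq> ?D \<and> 2 \<le> card F" using F0D F0E0 FFp by auto
          show "\<forall>F1\<in>?F. \<forall>F2\<in>?F. F1 \<noteq> F2 \<longrightarrow> F1 \<inter> F2 = {}"
          proof (intro ballI impI)
            fix F1 F2 assume F12: "F1 \<in> ?F" "F2 \<in> ?F" "F1 \<noteq> F2"
            have aux: "F \<inter> (F0 - {x}) = {}" if "F \<in> FF" "F \<inter> E0 = {}" for F
            proof -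
              have "F \<noteq> F0" using that F0 x by auto
              then have "F \<inter> F0 = {}" using dF that(1) F0(1) by blast
              then show ?thesis by auto
            qed
            show "F1 \<inter> F2 = {}" using F12 dF aux by blast
          qed
        qed (use finD dE in auto)
        then obtain Y where Y: "Y \<subseteq> ?D" "\<forall>E\<in>?E. E \<inter> Y \<noteq> {}" "\<forall>F\<in>?F. \<not> F \<subseteq> Y" by blast
        show ?thesis
        proof (intro exI[of _ "insert x Y"] conjI ballI)
          show "insert x Y \<subseteq> D" using Y(1) x E0D by auto
          fix E assume "E \<in> EE" then show "E \<inter> insert x Y \<noteq> {}" using Y(2) x by (cases "E = E0") auto
        next
          fix F assume F: "F \<in> FF"
          show "\<not> F \<subseteq> insert x Y"
          proof (cases "F = F0")
            case True then show ?thesis using Y(3) by auto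
          next
            case FnF0: False
            show ?thesis
            proof (cases "F \<inter> E0 = {}")
              case True then show ?thesis using Y(3) F x by auto
            next
              case False
              then obtain y where y: "y \<in> F" "y \<in> E0" by auto
              have "y \<noteq> x" using Fx[OF F] FnF0 y by auto
              then show ?thesis using y Y(1) by auto
            qed
          qed
        qed
      next
        case False
        then have "card F0 = 2" using cF0 by simp
        then obtain a b where ab: "F0 = {a, b}" "a \<noteq> b" unfolding card_2_iff by blast
        define x' where "x' = (if a = x then b else a)"
        have F0eq: "F0 = {x, x'}" and xx': "x' \<noteq> x"
          using ab F0(2) unfolding x'_def by auto
        have x'E0: "x' \<notin> E0" using F0E0 F0eq xx' by auto
        have x'D: "x' \<in> D" using F0D F0eq by auto
        have Fx': "F = F0" if "F \<in> FF" "x' \<in> F" for F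
        proof (rule ccontr)
          assume "F \<noteq> F0"
          then have "F \<inter> F0 = {}" using dF that(1) F0(1) by blast
          then show False using that(2) F0eq by auto
        qed
        show ?thesis
        proof (cases "\<exists>E1\<in>EE. x' \<in> E1")
          case False
          let ?D = "D - insert x' E0" and ?E = "EE - {E0}" and ?F = "{F\<in>FF. F \<inter> insert x' E0 = {}}"
          have "\<exists>Y\<subseteq>?D. (\<forall>E\<in>?E. E \<inter> Y \<noteq> {}) \<and> (\<forall>F\<in>?F. \<not> F \<subseteq> Y)"
          proof (rule less.hyps)
            show "card ?D < card D" using cardlt[of "insert x' E0" x] E0D x'D x by auto
            show "\<forall>E\<in>?E. E \<subseteq> ?D \<and> 2 \<le> card E"
            proof
              fix E assume E: "E \<in> ?E"
              have "E \<inter> E0 = {}" using dE E E0 by auto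
              moreover have "x' \<notin> E" using False E by auto
              ultimately show "E \<subseteq> ?D \<and> 2 \<le> card E" using EEp E by auto
            qed
            show "\<forall>F\<in>?F. F \<subseteq> ?D \<and> 2 \<le> card F" using FFp by auto
            show "\<forall>E1\<in>?E. \<forall>E2\<in>?E. E1 \<noteq> E2 \<longrightarrow> E1 \<inter> E2 = {}" using dE by blast
            show "\<forall>F1\<in>?F. \<forall>F2\<in>?F. F1 \<noteq> F2 \<longrightarrow> F1 \<inter> F2 = {}" using dF by blast
          qed (use finD in auto)
          then obtain Y where Y: "Y \<subseteq> ?D" "\<forall>E\<in>?E. E \<inter> Y \<noteq> {}" "\<forall>F\<in>?F. \<not> F \<subseteq> Y" by blast
          show ?thesis
          proof (intro exI[of _ "insert x Y"] conjI ballI)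
            show "insert x Y \<subseteq> D" using Y(1) x E0D by auto
            fix E assume "E \<in> EE" then show "E \<inter> insert x Y \<noteq> {}" using Y(2) x by (cases "E = E0") auto
          next
            fix F assume F: "F \<in> FF"
            show "\<not> F \<subseteq> insert x Y"
            proof (cases "F = F0")
              case True then show ?thesis using Y(1) F0eq xx' by auto
            next
              case FnF0: False
              show ?thesis
              proof (cases "F \<inter> insert x' E0 = {}")
                case True then show ?thesis using Y(3) F x by auto
              next
                case False
                then obtain y where y: "y \<in> F" "y \<in> insert x' E0" by auto
                have "y \<noteq> x" "y \<noteq> x'" using Fx[OF F] Fx'[OF F] FnF0 y by auto
                then show ?thesis using y Y(1) by auto
              qed
            qed
          qed
        next
          case True
          then obtain E1 where E1: "E1 \<in> EE" "x' \<in> E1" by auto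
          have E10: "E1 \<noteq> E0" using E1 x'E0 by auto
          have E1D: "E1 \<subseteq> D" and cE1: "2 \<le> card E1" using EEp E1 by auto
          have finE1: "finite E1" using E1D finD finite_subset by auto
          have dj01: "E0 \<inter> E1 = {}" using dE E0 E1 E10 by auto
          define M where "M = (E0 - {x}) \<union> (E1 - {x'})"
          let ?D = "D - {x, x'}" and ?E = "insert M (EE - {E0, E1})" and ?F = "FF - {F0}"
          have "\<exists>Y\<subseteq>?D. (\<forall>E\<in>?E. E \<inter> Y \<noteq> {}) \<and> (\<forall>F\<in>?F. \<not> F \<subseteq> Y)"
          proof (rule less.hyps)
            show "card ?D < card D" using cardlt[of "{x, x'}" x] E0D x'D x by auto
            have c1: "card (E0 - {x}) = card E0 - 1" using x finE0 by simp
            have c2: "card (E1 - {x'}) = card E1 - 1" using E1 finE1 by simp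
            have "card M = card (E0 - {x}) + card (E1 - {x'})"
              unfolding M_def using finE0 finE1 dj01 by (intro card_Un_disjoint) auto
            then have "2 \<le> card M" using c1 c2 cE0 cE1 by simp
            moreover have "M \<subseteq> ?D" unfolding M_def using E0D E1D dj01 x E1 x'E0 by auto
            moreover have "E \<subseteq> ?D \<and> 2 \<le> card E" if "E \<in> EE - {E0, E1}" for E
            proof -
              have "E \<inter> E0 = {}" "E \<inter> E1 = {}" using dE that E0 E1 by auto
              then show ?thesis using EEp that x E1(2) by auto
            qed
            ultimately show "\<forall>E\<in>?E. E \<subseteq> ?D \<and> 2 \<le> card E" by blast
            show "\<forall>E1\<in>?E. \<forall>E2\<in>?E. E1 \<noteq> E2 \<longrightarrow> E1 \<inter> E2 = {}"
            proof (intro ballI impI)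
              fix A1 A2 assume A: "A1 \<in> ?E" "A2 \<in> ?E" "A1 \<noteq> A2"
              have aux: "E \<inter> M = {}" if "E \<in> EE" "E \<noteq> E0" "E \<noteq> E1" for E
              proof -
                have "E \<inter> E0 = {}" "E \<inter> E1 = {}" using that dE E0 E1 by auto
                then show ?thesis unfolding M_def by auto
              qed
              show "A1 \<inter> A2 = {}"
              proof (cases "A1 = M")
                case True
                then have "A2 \<in> EE - {E0, E1}" using A by auto
                then show ?thesis using aux True by auto
              next
                case A1M: False
                then have A1E: "A1 \<in> EE - {E0, E1}" using A by auto
                show ?thesis
                proof (cases "A2 = M")
                  case True then show ?thesis using aux A1E by auto
                next
                  case False
                  then have "A2 \<in> EE - {E0, E1}" using A by auto
                  then show ?thesis using A1E A(3) dE by auto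
                qed
              qed
            qed
            show "\<forall>F\<in>?F. F \<subseteq> ?D \<and> 2 \<le> card F"
            proof
              fix F assume F: "F \<in> ?F"
              then have "x \<notin> F" "x' \<notin> F" using Fx Fx' by auto
              then show "F \<subseteq> ?D \<and> 2 \<le> card F" using FFp F by auto
            qed
            show "\<forall>F1\<in>?F. \<forall>F2\<in>?F. F1 \<noteq> F2 \<longrightarrow> F1 \<inter> F2 = {}" using dF by auto
          qed (use finD in auto)
          then obtain Y where Y: "Y \<subseteq> ?D" "\<forall>E\<in>?E. E \<inter> Y \<noteq> {}" "\<forall>F\<in>?F. \<not> F \<subseteq> Y" by blast
          obtain z where z: "z \<in> M" "z \<in> Y" using Y(2) by auto
          define Y' where "Y' = (if z \<in> E0 then insert x' Y else insert x Y)"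
          have Y'D: "Y' \<subseteq> D" unfolding Y'_def using Y(1) x'D x E0D by auto
          have hitE0: "E0 \<inter> Y' \<noteq> {}" unfolding Y'_def using z M_def x by auto
          have hitE1: "E1 \<inter> Y' \<noteq> {}" unfolding Y'_def using z M_def E1 dj01 by auto
          show ?thesis
          proof (intro exI[of _ Y'] conjI ballI)
            show "Y' \<subseteq> D" by (rule Y'D)
            fix E assume E: "E \<in> EE"
            show "E \<inter> Y' \<noteq> {}"
            proof (cases "E = E0 \<or> E = E1")
              case True then show ?thesis using hitE0 hitE1 by auto
            next
              case False then show ?thesis using Y(2) E unfolding Y'_def by auto
            qed
          next
            fix F assume F: "F \<in> FF"
            show "\<not> F \<subseteq> Y'"
            proof (cases "F = F0")
              case True then show ?thesis using Y(1) F0eq xx' unfolding Y'_def by auto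
            next
              case False
              then have "x \<notin> F" "x' \<notin> F" using Fx[OF F] Fx'[OF F] by auto
              then show ?thesis using Y(3) F False unfolding Y'_def by auto
            qed
          qed
        qed
      qed
    qed
  qed
qed


lemma R_top:
  assumes "finite U" "laminar L" "{} \<notin> L" "\<forall>S\<in>L. S \<subseteq> B \<longrightarrow> odd (card S)"
  shows "\<exists>c. good B L U c"
proof (cases "U \<subseteq> B")
  case True
  have "good B L U (\<lambda>_. (1,0))" by (rule good_inB[OF assms(1) True assms(4)]) auto
  then show ?thesis by blast
next
  case False
  have "((1::bit),(0::bit)) \<noteq> 0" by (simp add: zero_prod_def)
  then show ?thesis using R_main[OF assms False] by blast
qed

definition idx :: "bb \<Rightarrow> nat" where
  "idx v = (if v = (1,0) then 0 else if v = (0,1) then 1 else 2)"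

definition vec :: "nat \<Rightarrow> bb" where
  "vec k = (if k = 0 then (1,0) else if k = 1 then (0,1) else (1,1))"

definition enc :: "bb \<Rightarrow> bb \<Rightarrow> nat" where
  "enc v w = 3 * idx v + idx w + 1"

definition dec1 :: "nat \<Rightarrow> bb" where "dec1 i = vec ((i - 1) div 3)"
definition dec2 :: "nat \<Rightarrow> bb" where "dec2 i = vec ((i - 1) mod 3)"

lemma idx_lt: "idx v < 3" unfolding idx_def by auto

lemma vec_idx: "v \<noteq> 0 \<Longrightarrow> vec (idx v) = v"
  using bb_cases[of v] unfolding vec_def idx_def by (auto simp: zero_prod_def)

lemma dec1_enc: "v \<noteq> 0 \<Longrightarrow> dec1 (enc v w) = v"
  unfolding dec1_def enc_def using idx_lt[of w] vec_idx[of v] by simp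

lemma dec2_enc: "w \<noteq> 0 \<Longrightarrow> dec2 (enc v w) = w"
  unfolding dec2_def enc_def using idx_lt[of w] vec_idx[of w] by simp

lemma enc_range: "v \<noteq> 0 \<Longrightarrow> w \<noteq> 0 \<Longrightarrow> \<not> (v = (1,1) \<and> w = (1,1)) \<Longrightarrow> enc v w \<in> {1..8}"
  using bb_cases[of v] bb_cases[of w] unfolding enc_def idx_def by (auto simp: zero_prod_def)

lemma parity_sum:
  assumes "finite S" "\<forall>e\<in>S. c e = dec (phi e)" "\<forall>e\<in>S. phi e \<in> {1..8::nat}"
    "\<forall>i\<in>{1..8}. even (card {e\<in>S. phi e = i})"
  shows "sum c S = (0::bb)"
proof -
  have "sum c S = sum (\<lambda>e. dec (phi e)) S" using assms(2) by (intro sum.cong) auto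
  also have "\<dots> = (\<Sum>i\<in>{1..8}. sum (\<lambda>e. dec (phi e)) {e\<in>S. phi e = i})"
    using assms(1,3) by (intro sum.group[symmetric]) auto
  also have "\<dots> = (\<Sum>i\<in>{1..8::nat}. sum (\<lambda>e. dec i) {e\<in>S. phi e = i})"
    by (intro sum.cong refl) auto
  also have "\<dots> = (\<Sum>i\<in>{1..8::nat}. 0)"
  proof (intro sum.cong refl)
    fix i :: nat assume i: "i \<in> {1..8}"
    have "finite {e\<in>S. phi e = i}" using assms(1) by auto
    then show "sum (\<lambda>e. dec i) {e\<in>S. phi e = i} = 0"
      using sum_const_bb[of "{e\<in>S. phi e = i}" "dec i"] assms(4) i by simp
  qed
  finally show ?thesis by simp
qed

lemma min_even_exists:
  assumes "finite D" "\<forall>S\<in>L. S \<subseteq> D" "S \<in> L" "even (card S)"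
  shows "\<exists>E\<in>{S\<in>L. even (card S) \<and> (\<forall>S'\<in>L. S' \<subset> S \<longrightarrow> odd (card S'))}. E \<subseteq> S"
proof -
  let ?A = "{S'\<in>L. S' \<subseteq> S \<and> even (card S')}"
  have "finite ?A" using assms(1,2) by (intro finite_subset[of ?A "Pow D"]) auto
  moreover have "S \<in> ?A" using assms by auto
  ultimately obtain m where m: "m \<in> ?A" "m \<le> S" "\<forall>b\<in>?A. b \<le> m \<longrightarrow> m = b"
    using finite_has_minimal2[of ?A S] by blast
  have "\<forall>S'\<in>L. S' \<subset> m \<longrightarrow> odd (card S')"
  proof (intro ballI impI)
    fix S' assume S': "S' \<in> L" "S' \<subset> m"
    show "odd (card S')"
    proof (rule ccontr)
      assume "\<not> odd (card S')"
      then have "S' \<in> ?A" using S' m(1) by auto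
      then show False using m(3) S'(2) by auto
    qed
  qed
  then show ?thesis using m(1) by auto
qed

theorem comb_main:
  assumes finD: "finite D" and lam1: "laminar L1" and lam2: "laminar L2"
    and sub1: "\<forall>S\<in>L1. S \<subseteq> D" and sub2: "\<forall>S\<in>L2. S \<subseteq> D"
  shows "\<exists>phi::'a \<Rightarrow> nat. (\<forall>e\<in>D. phi e \<in> {1..8}) \<and>
           (\<forall>S\<in>L1 \<union> L2. S \<noteq> {} \<longrightarrow> (\<exists>i\<in>{1..8}. odd (card {e\<in>S. phi e = i})))"
proof -
  define M1 where "M1 = L1 - {{}}"
  define M2 where "M2 = L2 - {{}}"
  have lamM1: "laminar M1" using lam1 unfolding M1_def laminar_def by blast
  have lamM2: "laminar M2" using lam2 unfolding M2_def laminar_def by blast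
  have subM1: "\<forall>S\<in>M1. S \<subseteq> D" and subM2: "\<forall>S\<in>M2. S \<subseteq> D" using sub1 sub2 unfolding M1_def M2_def by auto
  have neM1: "{} \<notin> M1" and neM2: "{} \<notin> M2" unfolding M1_def M2_def by auto
  define EE where "EE = {S\<in>M1. even (card S) \<and> (\<forall>S'\<in>M1. S' \<subset> S \<longrightarrow> odd (card S'))}"
  define FF where "FF = {S\<in>M2. even (card S) \<and> (\<forall>S'\<in>M2. S' \<subset> S \<longrightarrow> odd (card S'))}"
  have card2: "2 \<le> card S" if "S \<subseteq> D" "S \<noteq> {}" "even (card S)" for S
  proof -
    have "finite S" using that(1) finD by (rule finite_subset)
    then have "card S > 0" using that(2) by auto
    then show ?thesis using that(3) by presburger
  qed
  have disj: "\<forall>E1\<in>{S\<in>M. even (card S) \<and> (\<forall>S'\<in>M. S' \<subset> S \<longrightarrow> odd (card S'))}.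
              \<forall>E2\<in>{S\<in>M. even (card S) \<and> (\<forall>S'\<in>M. S' \<subset> S \<longrightarrow> odd (card S'))}. E1 \<noteq> E2 \<longrightarrow> E1 \<inter> E2 = {}"
    if "laminar M" for M :: "'a set set"
  proof (intro ballI impI)
    fix E1 E2 assume E: "E1 \<in> {S\<in>M. even (card S) \<and> (\<forall>S'\<in>M. S' \<subset> S \<longrightarrow> odd (card S'))}"
      "E2 \<in> {S\<in>M. even (card S) \<and> (\<forall>S'\<in>M. S' \<subset> S \<longrightarrow> odd (card S'))}" "E1 \<noteq> E2"
    have "E1 \<subseteq> E2 \<or> E2 \<subseteq> E1 \<or> E1 \<inter> E2 = {}" using that E unfolding laminar_def by auto
    moreover have "\<not> E1 \<subset> E2" using E by auto
    moreover have "\<not> E2 \<subset> E1" using E by auto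
    ultimately show "E1 \<inter> E2 = {}" using E(3) by auto
  qed
  obtain Y where Y: "Y \<subseteq> D" "\<forall>E\<in>EE. E \<inter> Y \<noteq> {}" "\<forall>F\<in>FF. \<not> F \<subseteq> Y"
  proof -
    have "\<exists>Y\<subseteq>D. (\<forall>E\<in>EE. E \<inter> Y \<noteq> {}) \<and> (\<forall>F\<in>FF. \<not> F \<subseteq> Y)"
    proof (rule part_lemma[OF finD])
      show "\<forall>E\<in>EE. E \<subseteq> D \<and> 2 \<le> card E"
      proof
        fix E assume "E \<in> EE"
        then have h: "E \<in> M1" "even (card E)" unfolding EE_def by auto
        then have "E \<subseteq> D" "E \<noteq> {}" using subM1 neM1 by auto
        then show "E \<subseteq> D \<and> 2 \<le> card E" using card2 h(2) by auto
      qed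
      show "\<forall>F\<in>FF. F \<subseteq> D \<and> 2 \<le> card F"
      proof
        fix F assume "F \<in> FF"
        then have h: "F \<in> M2" "even (card F)" unfolding FF_def by auto
        then have "F \<subseteq> D" "F \<noteq> {}" using subM2 neM2 by auto
        then show "F \<subseteq> D \<and> 2 \<le> card F" using card2 h(2) by auto
      qed
      show "\<forall>E1\<in>EE. \<forall>E2\<in>EE. E1 \<noteq> E2 \<longrightarrow> E1 \<inter> E2 = {}" using disj[OF lamM1] unfolding EE_def .
      show "\<forall>F1\<in>FF. \<forall>F2\<in>FF. F1 \<noteq> F2 \<longrightarrow> F1 \<inter> F2 = {}" using disj[OF lamM2] unfolding FF_def .
    qed
    then show ?thesis using that by blast
  qed
  have h1: "\<forall>S\<in>M1. S \<subseteq> D - Y \<longrightarrow> odd (card S)"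
  proof (intro ballI impI)
    fix S assume S: "S \<in> M1" "S \<subseteq> D - Y"
    show "odd (card S)"
    proof (rule ccontr)
      assume "\<not> odd (card S)"
      then obtain E where "E \<in> EE" "E \<subseteq> S" using min_even_exists[OF finD subM1 S(1)] unfolding EE_def by auto
      then show False using Y(2) S(2) by auto
    qed
  qed
  have h2: "\<forall>S\<in>M2. S \<subseteq> Y \<longrightarrow> odd (card S)"
  proof (intro ballI impI)
    fix S assume S: "S \<in> M2" "S \<subseteq> Y"
    show "odd (card S)"
    proof (rule ccontr)
      assume "\<not> odd (card S)"
      then obtain F where "F \<in> FF" "F \<subseteq> S" using min_even_exists[OF finD subM2 S(1)] unfolding FF_def by auto
      then show False using Y(3) S(2) by auto
    qed
  qed
  obtain c1 where c1: "good (D - Y) M1 D c1" using R_top[OF finD lamM1 neM1 h1] by blast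
  obtain c2 where c2: "good Y M2 D c2" using R_top[OF finD lamM2 neM2 h2] by blast
  define phi where "phi e = enc (c1 e) (c2 e)" for e
  have nz1: "c1 e \<noteq> 0" and nz2: "c2 e \<noteq> 0" if "e \<in> D" for e using c1 c2 that unfolding good_def by auto
  have notboth: "\<not> (c1 e = (1,1) \<and> c2 e = (1,1))" if "e \<in> D" for e
    using c1 c2 that unfolding good_def by (cases "e \<in> Y") auto
  have range: "\<forall>e\<in>D. phi e \<in> {1..8}" unfolding phi_def using nz1 nz2 notboth enc_range by auto
  have d1: "c1 e = dec1 (phi e)" and d2: "c2 e = dec2 (phi e)" if "e \<in> D" for e
    unfolding phi_def using dec1_enc[OF nz1[OF that]] dec2_enc[OF nz2[OF that]] by auto
  have main: "\<exists>i\<in>{1..8}. odd (card {e\<in>S. phi e = i})" if S: "S \<in> L1 \<union> L2" "S \<noteq> {}" for S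
  proof (rule ccontr)
    assume "\<not> (\<exists>i\<in>{1..8}. odd (card {e\<in>S. phi e = i}))"
    then have ev: "\<forall>i\<in>{1..8}. even (card {e\<in>S. phi e = i})" by auto
    have SD: "S \<subseteq> D" using S sub1 sub2 by auto
    have finS: "finite S" using SD finD finite_subset by auto
    show False
    proof (cases "S \<in> L1")
      case True
      then have "S \<in> M1" using S(2) unfolding M1_def by auto
      then have "sum c1 S \<noteq> 0" using c1 SD unfolding good_def by auto
      moreover have "sum c1 S = 0"
      proof (rule parity_sum[OF finS, of c1 dec1 phi])
        show "\<forall>e\<in>S. c1 e = dec1 (phi e)" using d1 SD by auto
        show "\<forall>e\<in>S. phi e \<in> {1..8}" using range SD by auto
      qed (rule ev)
      ultimately show False by simp
    next
      case False
      then have "S \<in> M2" using S unfolding M2_def by auto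
      then have "sum c2 S \<noteq> 0" using c2 SD unfolding good_def by auto
      moreover have "sum c2 S = 0"
      proof (rule parity_sum[OF finS, of c2 dec2 phi])
        show "\<forall>e\<in>S. c2 e = dec2 (phi e)" using d2 SD by auto
        show "\<forall>e\<in>S. phi e \<in> {1..8}" using range SD by auto
      qed (rule ev)
      ultimately show False by simp
    qed
  qed
  show ?thesis using range main by blast
qed

abbreviation conn :: "('e \<Rightarrow> 'v set) \<Rightarrow> 'e set \<Rightarrow> ('v \<times> 'v) set" where
  "conn ends F \<equiv> (adj_rel ends F)\<^sup>*"

lemma adj_sym: "(x, y) \<in> adj_rel ends F \<Longrightarrow> (y, x) \<in> adj_rel ends F"
  unfolding adj_rel_def by (auto simp: insert_commute)

lemma conn_sym: "(x, y) \<in> conn ends F \<Longrightarrow> (y, x) \<in> conn ends F"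
proof (induction rule: rtrancl_induct)
  case base then show ?case by simp
next
  case (step y z)
  then show ?case using adj_sym converse_rtrancl_into_rtrancl by metis
qed

lemma conn_trans: "(x, y) \<in> conn ends F \<Longrightarrow> (y, z) \<in> conn ends F \<Longrightarrow> (x, z) \<in> conn ends F"
  by (rule rtrancl_trans)

lemma adj_mono: "F \<subseteq> G \<Longrightarrow> adj_rel ends F \<subseteq> adj_rel ends G"
  unfolding adj_rel_def by auto

lemma conn_mono: "F \<subseteq> G \<Longrightarrow> (x, y) \<in> conn ends F \<Longrightarrow> (x, y) \<in> conn ends G"
  using rtrancl_mono[OF adj_mono] by blast

lemma conn_edge: "e \<in> F \<Longrightarrow> ends e = {x, y} \<Longrightarrow> (x, y) \<in> conn ends F"
  unfolding adj_rel_def by (intro r_into_rtrancl) auto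

definition is_path :: "('e \<Rightarrow> 'v set) \<Rightarrow> 'e set \<Rightarrow> 'v list \<Rightarrow> 'e list \<Rightarrow> bool" where
  "is_path ends F vs es \<longleftrightarrow> vs \<noteq> [] \<and> length vs = Suc (length es) \<and> distinct vs \<and> set es \<subseteq> F \<and>
     (\<forall>i < length es. ends (es ! i) = {vs ! i, vs ! Suc i})"

lemma path_exists:
  assumes "(x, y) \<in> conn ends F"
  shows "\<exists>vs es. is_path ends F vs es \<and> hd vs = x \<and> last vs = y"
  using assms
proof (induction rule: rtrancl_induct)
  case base
  have "is_path ends F [x] []" unfolding is_path_def by simp
  then show ?case by force
next
  case (step y z)
  obtain vs es where P: "is_path ends F vs es" "hd vs = x" "last vs = y" using step.IH by blast
  obtain g where g: "g \<in> F" "ends g = {y, z}" using step.hyps(2) unfolding adj_rel_def by auto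
  have len: "length vs = Suc (length es)" and ne: "vs \<noteq> []" and dist: "distinct vs"
    and sub: "set es \<subseteq> F" and ed: "\<forall>i < length es. ends (es ! i) = {vs ! i, vs ! Suc i}"
    using P(1) unfolding is_path_def by auto
  show ?case
  proof (cases "z \<in> set vs")
    case True
    then obtain j where j: "j < length vs" "vs ! j = z" by (auto simp: in_set_conv_nth)
    let ?vs = "take (Suc j) vs" and ?es = "take j es"
    have "is_path ends F ?vs ?es"
      unfolding is_path_def
    proof (intro conjI allI impI)
      show "?vs \<noteq> []" using ne by simp
      show "length ?vs = Suc (length ?es)" using j len by simp
      show "distinct ?vs" using dist by simp
      show "set ?es \<subseteq> F" using sub set_take_subset by fastforce
      fix i assume i: "i < length ?es"
      then have "i < length es" "i < j" by auto
      then show "ends (?es ! i) = {?vs ! i, ?vs ! Suc i}" using ed by simp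
    qed
    moreover have "hd ?vs = x" using P(2) ne by (simp add: hd_take)
    moreover have "last ?vs = z" using j by (simp add: take_Suc_conv_app_nth)
    ultimately show ?thesis by blast
  next
    case False
    let ?vs = "vs @ [z]" and ?es = "es @ [g]"
    have lastvs: "vs ! length es = y" using P(3) ne len by (simp add: last_conv_nth)
    have "is_path ends F ?vs ?es"
      unfolding is_path_def
    proof (intro conjI allI impI)
      show "?vs \<noteq> []" by simp
      show "length ?vs = Suc (length ?es)" using len by simp
      show "distinct ?vs" using dist False by simp
      show "set ?es \<subseteq> F" using sub g by simp
      fix i assume i: "i < length ?es"
      show "ends (?es ! i) = {?vs ! i, ?vs ! Suc i}"
      proof (cases "i < length es")
        case True
        then show ?thesis using ed len by (simp add: nth_append)
      next
        case False
        then have "i = length es" using i by simp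
        then show ?thesis using g lastvs len by (simp add: nth_append)
      qed
    qed
    moreover have "hd ?vs = x" using P(2) ne by simp
    moreover have "last ?vs = z" by simp
    ultimately show ?thesis by blast
  qed
qed

lemma path_distinct_edges:
  assumes "is_path ends F vs es"
  shows "distinct es"
proof -
  have len: "length vs = Suc (length es)" and dist: "distinct vs"
    and ed: "\<forall>i < length es. ends (es ! i) = {vs ! i, vs ! Suc i}"
    using assms unfolding is_path_def by auto
  show ?thesis
  unfolding distinct_conv_nth
  proof (intro allI impI)
    fix i j assume ij: "i < length es" "j < length es" "i \<noteq> j"
    show "es ! i \<noteq> es ! j"
    proof
      assume eq: "es ! i = es ! j"
      then have "{vs ! i, vs ! Suc i} = {vs ! j, vs ! Suc j}" using ed ij by metis
      then have a: "vs ! i = vs ! j \<or> vs ! i = vs ! Suc j" and b: "vs ! Suc i = vs ! j \<or> vs ! Suc i = vs ! Suc j"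
        by (auto simp: doubleton_eq_iff)
      have "i = j \<or> i = Suc j" using a dist ij len by (auto simp: nth_eq_iff_index_eq)
      moreover have "Suc i = j \<or> Suc i = Suc j" using b dist ij len by (auto simp: nth_eq_iff_index_eq)
      ultimately show False using ij(3) by auto
    qed
  qed
qed

lemma acyclic_no_loop:
  assumes "acyclic_edges ends T" "e \<in> T" "ends e = {p, q}"
  shows "p \<noteq> q"
proof
  assume "p = q"
  then have "is_cycle ends T [p] [e]" using assms(2,3) unfolding is_cycle_def by auto
  then show False using assms(1) unfolding acyclic_edges_def by blast
qed

lemma acyclic_cut:
  assumes "acyclic_edges ends T" "e \<in> T" "ends e = {p, q}"
  shows "(p, q) \<notin> conn ends (T - {e})"
proof
  assume h: "(p, q) \<in> conn ends (T - {e})"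
  obtain vs es where P: "is_path ends (T - {e}) vs es" "hd vs = p" "last vs = q"
    using path_exists[OF h] by blast
  have pq: "p \<noteq> q" using acyclic_no_loop[OF assms] .
  have len: "length vs = Suc (length es)" and ne: "vs \<noteq> []" and dist: "distinct vs"
    and sub: "set es \<subseteq> T - {e}" and ed: "\<forall>i < length es. ends (es ! i) = {vs ! i, vs ! Suc i}"
    using P(1) unfolding is_path_def by auto
  have des: "distinct es" using path_distinct_edges[OF P(1)] .
  have v0: "vs ! 0 = p" using P(2) ne by (simp add: hd_conv_nth)
  have vl: "vs ! length es = q" using P(3) ne len by (simp add: last_conv_nth)
  have "is_cycle ends T vs (es @ [e])"
    unfolding is_cycle_def
  proof (intro conjI allI impI)
    show "length vs = length (es @ [e])" using len by simp
    show "1 \<le> length (es @ [e])" by simp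
    show "distinct vs" by (rule dist)
    show "distinct (es @ [e])" using des sub by auto
    show "set (es @ [e]) \<subseteq> T" using sub assms(2) by auto
    fix i assume i: "i < length (es @ [e])"
    show "ends ((es @ [e]) ! i) = {vs ! i, vs ! ((i + 1) mod length vs)}"
    proof (cases "i < length es")
      case True
      then have "(i + 1) mod length vs = Suc i" using len by simp
      then show ?thesis using True ed by (simp add: nth_append)
    next
      case False
      then have ii: "i = length es" using i by simp
      then have "(i + 1) mod length vs = 0" using len by simp
      then show ?thesis using ii v0 vl assms(3) by (auto simp: nth_append)
    qed
  qed
  then show False using assms(1) unfolding acyclic_edges_def by blast
qed

lemma conn_avoid:
  assumes "(z, v) \<in> conn ends F" "\<forall>v'. (z, v') \<in> conn ends F \<longrightarrow> v' \<notin> ends g"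
  shows "(z, v) \<in> conn ends (F - {g})"
  using assms(1)
proof (induction rule: rtrancl_induct)
  case base then show ?case by simp
next
  case (step y v')
  obtain h where h: "h \<in> F" "ends h = {y, v'}" using step.hyps(2) unfolding adj_rel_def by auto
  have "h \<noteq> g"
  proof
    assume "h = g"
    then have "y \<in> ends g" using h(2) by auto
    moreover have "(z, y) \<in> conn ends F" using step.hyps(1) .
    ultimately show False using assms(2) by blast
  qed
  then have "(y, v') \<in> adj_rel ends (F - {g})" using h unfolding adj_rel_def by auto
  then show ?case by (rule rtrancl_into_rtrancl[OF step.IH])
qed

lemma conn_split:
  assumes "(z, v) \<in> conn ends T" "f \<in> T" "ends f = {p, q}" "(z, p) \<in> conn ends (T - {f}) \<or> (z, q) \<in> conn ends (T - {f})"
  shows "(p, v) \<in> conn ends (T - {f}) \<or> (q, v) \<in> conn ends (T - {f})"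
  using assms(1)
proof (induction rule: rtrancl_induct)
  case base
  then show ?case
  proof (cases "(z, p) \<in> conn ends (T - {f})")
    case True then show ?thesis using conn_sym[OF True] by simp
  next
    case False then have "(z, q) \<in> conn ends (T - {f})" using assms(4) by simp
    then show ?thesis using conn_sym by fast
  qed
next
  case (step y v')
  obtain h where h: "h \<in> T" "ends h = {y, v'}" using step.hyps(2) unfolding adj_rel_def by auto
  show ?case
  proof (cases "h = f")
    case True
    then have "v' = p \<or> v' = q" using h assms(3) by (auto simp: doubleton_eq_iff)
    then show ?thesis by auto
  next
    case False
    then have "(y, v') \<in> adj_rel ends (T - {f})" using h unfolding adj_rel_def by auto
    note adj = this
    show ?thesis
    proof (cases "(p, y) \<in> conn ends (T - {f})")
      case True then show ?thesis using rtrancl_into_rtrancl[OF True adj] by simp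
    next
      case False then have "(q, y) \<in> conn ends (T - {f})" using step.IH by simp
      then show ?thesis using rtrancl_into_rtrancl[OF _ adj] by fast
    qed
  qed
qed

lemma ends_pair:
  assumes "graph V E ends" "e \<in> E"
  shows "\<exists>p q. ends e = {p, q}"
proof -
  have "card (ends e) = 1 \<or> card (ends e) = 2" using assms unfolding graph_def by auto
  then show ?thesis
  proof
    assume "card (ends e) = 1"
    then obtain p where "ends e = {p}" using card_1_singletonE by blast
    then show ?thesis by auto
  next
    assume "card (ends e) = 2"
    then show ?thesis unfolding card_2_iff by blast
  qed
qed

locale fsetup =
  fixes V :: "'v set" and E :: "'e set" and ends :: "'e \<Rightarrow> 'v set" and T :: "'e set"
    and f0 :: 'e and u :: 'v and w :: 'v
  assumes gr: "graph V E ends" and sf: "spanning_forest V E ends T" and f0T: "f0 \<in> T"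
    and f0uw: "ends f0 = {u, w}"
begin

definition X where "X = {v. (u, v) \<in> conn ends (T - {f0})}"
definition Y where "Y = {v. (w, v) \<in> conn ends (T - {f0})}"
definition D where "D = fund_cut V E ends T f0 - {f0}"
definition N where "N f = {v. (\<exists>z\<in>ends f. (z, v) \<in> conn ends (T - {f})) \<and> (u, v) \<notin> conn ends (T - {f})}"

lemma acyc: "acyclic_edges ends T" using sf unfolding spanning_forest_def by auto
lemma TE: "T \<subseteq> E" using sf unfolding spanning_forest_def by auto
lemma ends_V: "e \<in> E \<Longrightarrow> ends e \<subseteq> V" using gr unfolding graph_def by auto
lemma finE: "finite E" using gr unfolding graph_def by auto

lemma uw: "u \<noteq> w" using acyclic_no_loop[OF acyc f0T f0uw] .

lemma uw_cut: "(u, w) \<notin> conn ends (T - {f0})" using acyclic_cut[OF acyc f0T f0uw] .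

lemma XY: "X \<inter> Y = {}"
proof (rule ccontr)
  assume "X \<inter> Y \<noteq> {}"
  then obtain v where v: "(u, v) \<in> conn ends (T - {f0})" "(w, v) \<in> conn ends (T - {f0})" unfolding X_def Y_def by auto
  have "(u, w) \<in> conn ends (T - {f0})" using conn_trans[OF v(1) conn_sym[OF v(2)]] .
  then show False using uw_cut by simp
qed

lemma uwT: "(u, w) \<in> conn ends T" using conn_edge[of f0 T ends u w, OF f0T f0uw] .

lemma cover: "(u, v) \<in> conn ends T \<Longrightarrow> v \<in> X \<union> Y"
  using conn_split[of u v ends T f0 u w] f0T f0uw unfolding X_def Y_def by auto

lemma D_ends: "e \<in> D \<Longrightarrow> \<exists>a b. ends e = {a, b} \<and> a \<in> X \<and> b \<in> Y \<and> e \<in> E"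
proof -
  assume "e \<in> D"
  then obtain u' w' a b where h: "e \<in> E" "ends f0 = {u', w'}" "a \<in> component V ends (T - {f0}) u'"
    "b \<in> component V ends (T - {f0}) w'" "ends e = {a, b}"
    unfolding D_def fund_cut_def by blast
  have "(u' = u \<and> w' = w) \<or> (u' = w \<and> w' = u)" using h(2) f0uw by (auto simp: doubleton_eq_iff)
  then show ?thesis
  proof
    assume "u' = u \<and> w' = w"
    then show ?thesis using h unfolding component_def X_def Y_def by auto
  next
    assume "u' = w \<and> w' = u"
    then have "b \<in> X" "a \<in> Y" using h unfolding component_def X_def Y_def by auto
    then show ?thesis using h(1,5) by (intro exI[of _ b] exI[of _ a]) (auto simp: insert_commute)
  qed
qed

lemma finD: "finite D"
proof -
  have "D \<subseteq> E" unfolding D_def fund_cut_def by auto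
  then show ?thesis using finE finite_subset by auto
qed

lemma X_T: "v \<in> X \<Longrightarrow> (u, v) \<in> conn ends T"
  unfolding X_def using conn_mono[of "T - {f0}" T] by auto

lemma Y_T: "v \<in> Y \<Longrightarrow> (u, v) \<in> conn ends T"
proof -
  assume "v \<in> Y"
  then have "(w, v) \<in> conn ends (T - {f0})" unfolding Y_def by auto
  then have "(w, v) \<in> conn ends T" using conn_mono[of "T - {f0}" T] by auto
  then show ?thesis using conn_trans[OF uwT] by blast
qed

lemma N_f0: "N f0 = Y"
proof
  show "N f0 \<subseteq> Y"
  proof
    fix v assume "v \<in> N f0"
    then obtain z where z: "z \<in> {u, w}" "(z, v) \<in> conn ends (T - {f0})" "(u, v) \<notin> conn ends (T - {f0})"
      unfolding N_def f0uw by auto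
    then have "z = w" by auto
    then show "v \<in> Y" using z unfolding Y_def by auto
  qed
  show "Y \<subseteq> N f0"
  proof
    fix v assume v: "v \<in> Y"
    then have "v \<notin> X" using XY by auto
    then show "v \<in> N f0" using v unfolding N_def X_def Y_def f0uw by auto
  qed
qed

lemma caseA:
  assumes fT: "f \<in> T" and ff0: "f \<noteq> f0" and fpq: "ends f = {p, q}"
    and pu: "(p, u) \<in> conn ends (T - {f})"
  shows "N f = {v. (q, v) \<in> conn ends (T - {f})}"
    and "(q, u) \<notin> conn ends (T - {f})"
    and "\<And>v. v \<in> N f \<Longrightarrow> (q, v) \<in> conn ends (T - {f0})"
    and "N f \<inter> X = {} \<or> N f \<inter> Y = {}"
    and "\<And>e. e \<in> D \<Longrightarrow> e \<in> fund_cut V E ends T f \<longleftrightarrow> ends e \<inter> N f \<noteq> {}"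
proof -
  let ?S = "conn ends (T - {f})"
  have pq: "(p, q) \<notin> ?S" using acyclic_cut[OF acyc fT fpq] .
  show qu: "(q, u) \<notin> ?S"
  proof
    assume h: "(q, u) \<in> ?S"
    have "(p, q) \<in> ?S" using conn_trans[OF pu conn_sym[OF h]] .
    then show False using pq by simp
  qed
  have uwS: "(u, w) \<in> ?S" using conn_edge[of f0 "T - {f}" ends u w] f0T ff0 f0uw by auto
  show Nf: "N f = {v. (q, v) \<in> ?S}"
  proof
    show "N f \<subseteq> {v. (q, v) \<in> ?S}"
    proof
      fix v assume "v \<in> N f"
      then obtain z where z: "z \<in> {p, q}" "(z, v) \<in> ?S" "(u, v) \<notin> ?S" unfolding N_def fpq by auto
      have "z \<noteq> p"
      proof
        assume "z = p"
        then have "(p, v) \<in> ?S" using z(2) by simp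
        then have "(u, v) \<in> ?S" using conn_trans[OF conn_sym[OF pu]] by blast
        then show False using z(3) by simp
      qed
      then show "v \<in> {v. (q, v) \<in> ?S}" using z by auto
    qed
    show "{v. (q, v) \<in> ?S} \<subseteq> N f"
    proof
      fix v assume v: "v \<in> {v. (q, v) \<in> ?S}"
      have "(u, v) \<notin> ?S"
      proof
        assume h: "(u, v) \<in> ?S"
        have qv: "(q, v) \<in> ?S" using v by simp
        have "(q, u) \<in> ?S" using conn_trans[OF qv conn_sym[OF h]] .
        then show False using qu by simp
      qed
      then show "v \<in> N f" using v unfolding N_def fpq by auto
    qed
  qed
  have Q0: "(q, v) \<in> conn ends (T - {f0})" if "(q, v) \<in> ?S" for v
  proof -
    have "\<forall>v'. (q, v') \<in> ?S \<longrightarrow> v' \<notin> ends f0"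
    proof (intro allI impI)
      fix v' assume v': "(q, v') \<in> ?S"
      show "v' \<notin> ends f0"
      proof
        assume "v' \<in> ends f0"
        then have "v' = u \<or> v' = w" using f0uw by auto
        then have "(q, u) \<in> ?S"
        proof
          assume "v' = u" then show ?thesis using v' by simp
        next
          assume "v' = w" then have qw: "(q, w) \<in> ?S" using v' by simp
          show ?thesis using conn_trans[OF qw conn_sym[OF uwS]] .
        qed
        then show False using qu by simp
      qed
    qed
    then have h: "(q, v) \<in> conn ends (T - {f} - {f0})" using conn_avoid[OF that] by blast
    have sub: "T - {f} - {f0} \<subseteq> T - {f0}" by auto
    show ?thesis using conn_mono[OF sub h] .
  qed
  show "\<And>v. v \<in> N f \<Longrightarrow> (q, v) \<in> conn ends (T - {f0})" using Q0 Nf by auto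
  have uq: "(u, q) \<in> conn ends T"
  proof -
    have "(p, u) \<in> conn ends T" using conn_mono[OF Diff_subset pu] .
    then have "(u, p) \<in> conn ends T" by (rule conn_sym)
    moreover have "(p, q) \<in> conn ends T" using conn_edge[of f T ends p q, OF fT fpq] .
    ultimately show ?thesis by (rule conn_trans)
  qed
  then have "q \<in> X \<union> Y" by (rule cover)
  then show "N f \<inter> X = {} \<or> N f \<inter> Y = {}"
  proof
    assume qX: "q \<in> X"
    have "N f \<subseteq> X"
    proof
      fix v assume "v \<in> N f"
      then have "(q, v) \<in> conn ends (T - {f0})" using Q0 Nf by auto
      moreover have "(u, q) \<in> conn ends (T - {f0})" using qX unfolding X_def by simp
      ultimately show "v \<in> X" unfolding X_def using conn_trans[of u q] by blast
    qed
    then show ?thesis using XY by auto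
  next
    assume qY: "q \<in> Y"
    have "N f \<subseteq> Y"
    proof
      fix v assume "v \<in> N f"
      then have "(q, v) \<in> conn ends (T - {f0})" using Q0 Nf by auto
      moreover have "(w, q) \<in> conn ends (T - {f0})" using qY unfolding Y_def by simp
      ultimately show "v \<in> Y" unfolding Y_def using conn_trans[of w q] by blast
    qed
    then show ?thesis using XY by auto
  qed
  fix e assume eD: "e \<in> D"
  obtain a b where ab: "ends e = {a, b}" "a \<in> X" "b \<in> Y" "e \<in> E" using D_ends[OF eD] by blast
  have abV: "a \<in> V" "b \<in> V" using ends_V[OF ab(4)] ab(1) by auto
  have PQ: "(p, x) \<in> ?S \<or> (q, x) \<in> ?S" if "(u, x) \<in> conn ends T" for x
    using conn_split[OF that fT fpq] conn_sym[OF pu] by blast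
  have a_side: "(p, a) \<in> ?S \<or> (q, a) \<in> ?S" using PQ X_T[OF ab(2)] by blast
  have b_side: "(p, b) \<in> ?S \<or> (q, b) \<in> ?S" using PQ Y_T[OF ab(3)] by blast
  have disj: "\<not> ((p, x) \<in> ?S \<and> (q, x) \<in> ?S)" for x
  proof
    assume h: "(p, x) \<in> ?S \<and> (q, x) \<in> ?S"
    have "(p, q) \<in> ?S" using conn_trans[OF conjunct1[OF h] conn_sym[OF conjunct2[OF h]]] .
    then show False using pq by simp
  qed
  have notboth: "\<not> ((q, a) \<in> ?S \<and> (q, b) \<in> ?S)"
  proof
    assume "(q, a) \<in> ?S \<and> (q, b) \<in> ?S"
    then have qa: "(q, a) \<in> conn ends (T - {f0})" and qb: "(q, b) \<in> conn ends (T - {f0})" using Q0 by auto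
    have abc: "(a, b) \<in> conn ends (T - {f0})" using conn_trans[OF conn_sym[OF qa] qb] .
    have ua: "(u, a) \<in> conn ends (T - {f0})" using ab(2) unfolding X_def by auto
    have wb: "(w, b) \<in> conn ends (T - {f0})" using ab(3) unfolding Y_def by auto
    have "(u, w) \<in> conn ends (T - {f0})" using conn_trans[OF conn_trans[OF ua abc] conn_sym[OF wb]] .
    then show False using uw_cut by simp
  qed
  show "e \<in> fund_cut V E ends T f \<longleftrightarrow> ends e \<inter> N f \<noteq> {}"
  proof
    assume "e \<in> fund_cut V E ends T f"
    then obtain u' w' a' b' where h: "ends f = {u', w'}" "a' \<in> component V ends (T - {f}) u'"
      "b' \<in> component V ends (T - {f}) w'" "ends e = {a', b'}"
      unfolding fund_cut_def by blast
    have "(u' = p \<and> w' = q) \<or> (u' = q \<and> w' = p)" using h(1) fpq by (auto simp: doubleton_eq_iff)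
    then have "a' \<in> N f \<or> b' \<in> N f" using h(2,3) Nf unfolding component_def by auto
    then show "ends e \<inter> N f \<noteq> {}" using h(4) by auto
  next
    assume "ends e \<inter> N f \<noteq> {}"
    then have "(q, a) \<in> ?S \<or> (q, b) \<in> ?S" using ab(1) Nf by auto
    then show "e \<in> fund_cut V E ends T f"
    proof
      assume qa: "(q, a) \<in> ?S"
      then have pb: "(p, b) \<in> ?S" using notboth b_side by auto
      have f1: "ends f = {q, p}" using fpq by (simp add: insert_commute)
      have c1: "a \<in> component V ends (T - {f}) q" unfolding component_def using abV qa by simp
      have c2: "b \<in> component V ends (T - {f}) p" unfolding component_def using abV pb by simp
      show ?thesis unfolding fund_cut_def using ab(1,4) f1 c1 c2 by blast
    next
      assume qb: "(q, b) \<in> ?S"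
      then have pa: "(p, a) \<in> ?S" using notboth a_side by auto
      have c1: "a \<in> component V ends (T - {f}) p" unfolding component_def using abV pa by simp
      have c2: "b \<in> component V ends (T - {f}) q" unfolding component_def using abV qb by simp
      show ?thesis unfolding fund_cut_def using ab(1,4) fpq c1 c2 by blast
    qed
  qed
qed


lemma caseB:
  assumes fT: "f \<in> T" and fpq: "ends f = {p, q}"
    and np: "(p, u) \<notin> conn ends (T - {f})" and nq: "(q, u) \<notin> conn ends (T - {f})"
  shows "N f \<inter> X = {}" and "N f \<inter> Y = {}" and "\<And>e. e \<in> D \<Longrightarrow> e \<notin> fund_cut V E ends T f"
proof -
  let ?S = "conn ends (T - {f})"
  have far: "x \<notin> X \<union> Y" if "(p, x) \<in> conn ends T" for x
  proof
    assume "x \<in> X \<union> Y"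
    then have ux: "(u, x) \<in> conn ends T" using X_T Y_T by blast
    have "(p, u) \<in> conn ends T" using conn_trans[OF that conn_sym[OF ux]] .
    moreover have "(p, p) \<in> ?S \<or> (p, q) \<in> ?S" by simp
    ultimately have "(p, u) \<in> ?S \<or> (q, u) \<in> ?S" by (rule conn_split[of p u ends T f p q, OF _ fT fpq])
    then show False using np nq by simp
  qed
  have pqT: "(p, q) \<in> conn ends T" using conn_edge[of f T ends p q, OF fT fpq] .
  have Nsub: "(p, v) \<in> conn ends T" if "v \<in> N f" for v
  proof -
    have "\<exists>z\<in>ends f. (z, v) \<in> ?S" using that unfolding N_def by simp
    then obtain z where z0: "z \<in> ends f" "(z, v) \<in> ?S" by blast
    then have z: "z \<in> {p, q}" "(z, v) \<in> ?S" using fpq by auto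
    have zv: "(z, v) \<in> conn ends T" using conn_mono[OF Diff_subset z(2)] .
    show ?thesis
    proof (cases "z = p")
      case True then show ?thesis using zv by simp
    next
      case False then have "z = q" using z(1) by simp
      then show ?thesis using conn_trans[OF pqT] zv by simp
    qed
  qed
  show "N f \<inter> X = {}" using Nsub far by blast
  show "N f \<inter> Y = {}" using Nsub far by blast
  fix e assume eD: "e \<in> D"
  obtain a b where ab: "ends e = {a, b}" "a \<in> X" "b \<in> Y" "e \<in> E" using D_ends[OF eD] by blast
  show "e \<notin> fund_cut V E ends T f"
  proof
    assume "e \<in> fund_cut V E ends T f"
    then obtain u' w' a' b' where h: "ends f = {u', w'}" "a' \<in> component V ends (T - {f}) u'"
      "b' \<in> component V ends (T - {f}) w'" "ends e = {a', b'}"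
      unfolding fund_cut_def by blast
    have u'pq: "u' = p \<or> u' = q" using h(1) fpq by (auto simp: doubleton_eq_iff)
    have ua0: "(u', a') \<in> ?S" using h(2) unfolding component_def by simp
    have ua: "(u', a') \<in> conn ends T" using conn_mono[OF Diff_subset ua0] .
    have "(p, a') \<in> conn ends T"
      using u'pq
    proof
      assume "u' = p" then show ?thesis using ua by simp
    next
      assume "u' = q" then show ?thesis using conn_trans[OF pqT] ua by simp
    qed
    then have "a' \<notin> X \<union> Y" by (rule far)
    moreover have "a' \<in> X \<union> Y" using h(4) ab by auto
    ultimately show False by simp
  qed
qed

lemma set_char: "(\<And>e. e \<in> D \<Longrightarrow> e \<in> A \<longleftrightarrow> P e) \<Longrightarrow> A \<inter> D = {e\<in>D. P e}"
  by blast

lemma ends_pair_T: "f \<in> T \<Longrightarrow> \<exists>p q. ends f = {p, q}"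
  using ends_pair[OF gr] TE by blast

lemma cut_char:
  assumes fT: "f \<in> T"
  shows "fund_cut V E ends T f \<inter> D = {e\<in>D. ends e \<inter> N f \<noteq> {}}"
    and "N f \<inter> X = {} \<or> N f \<inter> Y = {}"
proof -
  have "fund_cut V E ends T f \<inter> D = {e\<in>D. ends e \<inter> N f \<noteq> {}} \<and> (N f \<inter> X = {} \<or> N f \<inter> Y = {})"
  proof (cases "f = f0")
    case True
    have "D \<subseteq> fund_cut V E ends T f0" unfolding D_def by auto
    then have e1: "fund_cut V E ends T f \<inter> D = D" using True by blast
    have "ends e \<inter> N f0 \<noteq> {}" if eD: "e \<in> D" for e
    proof -
      obtain a b where "ends e = {a, b}" "b \<in> Y" using D_ends[OF eD] by blast
      then show ?thesis using N_f0 by blast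
    qed
    then have e2: "{e\<in>D. ends e \<inter> N f \<noteq> {}} = D" using True by blast
    have e3: "N f \<inter> X = {}" using True N_f0 XY by blast
    show ?thesis using e1 e2 e3 by simp
  next
    case ff0: False
    obtain p q where fpq: "ends f = {p, q}" using ends_pair_T[OF fT] by blast
    show ?thesis
    proof (cases "(p, u) \<in> conn ends (T - {f})")
      case True
      have c: "\<And>e. e \<in> D \<Longrightarrow> e \<in> fund_cut V E ends T f \<longleftrightarrow> ends e \<inter> N f \<noteq> {}"
        using caseA(5)[OF fT ff0 fpq True] by blast
      have "fund_cut V E ends T f \<inter> D = {e\<in>D. ends e \<inter> N f \<noteq> {}}"
        using set_char[where A="fund_cut V E ends T f" and P="\<lambda>e. ends e \<inter> N f \<noteq> {}"] c by blast
      then show ?thesis using caseA(4)[OF fT ff0 fpq True] by simp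
    next
      case np: False
      show ?thesis
      proof (cases "(q, u) \<in> conn ends (T - {f})")
        case True
        have fqp: "ends f = {q, p}" using fpq by (simp add: insert_commute)
        have c: "\<And>e. e \<in> D \<Longrightarrow> e \<in> fund_cut V E ends T f \<longleftrightarrow> ends e \<inter> N f \<noteq> {}"
          using caseA(5)[OF fT ff0 fqp True] by blast
        have "fund_cut V E ends T f \<inter> D = {e\<in>D. ends e \<inter> N f \<noteq> {}}"
          using set_char[where A="fund_cut V E ends T f" and P="\<lambda>e. ends e \<inter> N f \<noteq> {}"] c by blast
        then show ?thesis using caseA(4)[OF fT ff0 fqp True] by simp
      next
        case False
        have "fund_cut V E ends T f \<inter> D = {}" using caseB(3)[OF fT fpq np False] by blast
        moreover have "{e\<in>D. ends e \<inter> N f \<noteq> {}} = {}"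
        proof -
          have "ends e \<inter> N f = {}" if eD: "e \<in> D" for e
          proof -
            obtain a b where ab: "ends e = {a, b}" "a \<in> X" "b \<in> Y" using D_ends[OF eD] by blast
            have "N f \<inter> X = {}" "N f \<inter> Y = {}" using caseB(1,2)[OF fT fpq np False] by auto
            then show ?thesis using ab by auto
          qed
          then show ?thesis by blast
        qed
        ultimately show ?thesis using caseB(1)[OF fT fpq np False] by simp
      qed
    qed
  qed
  then show "fund_cut V E ends T f \<inter> D = {e\<in>D. ends e \<inter> N f \<noteq> {}}"
    and "N f \<inter> X = {} \<or> N f \<inter> Y = {}" by auto
qed

lemma one_side:
  assumes fT: "f \<in> T" and gT: "g \<in> T" and ff0: "f \<noteq> f0" and gf0: "g \<noteq> f0"
    and fpq: "ends f = {p, q}" and pu: "(p, u) \<in> conn ends (T - {f})"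
    and gpq: "ends g = {p2, q2}" and p2u: "(p2, u) \<in> conn ends (T - {g})"
    and dis: "ends g \<inter> N f = {}"
  shows "N f \<subseteq> N g \<or> N f \<inter> N g = {}"
proof -
  have Nf: "N f = {v. (q, v) \<in> conn ends (T - {f})}" using caseA(1)[OF fT ff0 fpq pu] .
  have Ng: "N g = {v. (q2, v) \<in> conn ends (T - {g})}" using caseA(1)[OF gT gf0 gpq p2u] .
  have av: "\<forall>v'. (q, v') \<in> conn ends (T - {f}) \<longrightarrow> v' \<notin> ends g" using dis Nf by auto
  have toG: "(q, v) \<in> conn ends (T - {g})" if "v \<in> N f" for v
  proof -
    have "(q, v) \<in> conn ends (T - {f})" using that Nf by simp
    then have h: "(q, v) \<in> conn ends (T - {f} - {g})" using conn_avoid[OF _ av] by blast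
    have sub: "T - {f} - {g} \<subseteq> T - {g}" by auto
    show ?thesis using conn_mono[OF sub h] .
  qed
  show ?thesis
  proof (cases "q \<in> N g")
    case True
    then have q2q: "(q2, q) \<in> conn ends (T - {g})" using Ng by simp
    have "N f \<subseteq> N g"
    proof
      fix v assume "v \<in> N f"
      then have "(q, v) \<in> conn ends (T - {g})" by (rule toG)
      then show "v \<in> N g" using Ng conn_trans[OF q2q] by simp
    qed
    then show ?thesis by simp
  next
    case False
    have "N f \<inter> N g = {}"
    proof (rule ccontr)
      assume "N f \<inter> N g \<noteq> {}"
      then obtain v where v: "v \<in> N f" "v \<in> N g" by auto
      have qv: "(q, v) \<in> conn ends (T - {g})" using toG[OF v(1)] .
      have q2v: "(q2, v) \<in> conn ends (T - {g})" using v(2) Ng by simp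
      have "(q2, q) \<in> conn ends (T - {g})" using conn_trans[OF q2v conn_sym[OF qv]] .
      then show False using False Ng by simp
    qed
    then show ?thesis by simp
  qed
qed

lemma both_in:
  assumes fT: "f \<in> T" and gT: "g \<in> T" and ff0: "f \<noteq> f0" and fg: "f \<noteq> g"
    and fpq: "ends f = {p, q}" and pu: "(p, u) \<in> conn ends (T - {f})"
    and gpq: "ends g = {p2, q2}" and ne: "ends g \<inter> N f \<noteq> {}"
  shows "ends g \<subseteq> N f"
proof -
  have Nf: "N f = {v. (q, v) \<in> conn ends (T - {f})}" using caseA(1)[OF fT ff0 fpq pu] .
  have gTf: "g \<in> T - {f}" using gT fg by auto
  have pq2: "(p2, q2) \<in> conn ends (T - {f})" using conn_edge[of g "T - {f}" ends p2 q2, OF gTf gpq] .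
  have "p2 \<in> N f \<or> q2 \<in> N f" using ne gpq by auto
  then have "p2 \<in> N f \<and> q2 \<in> N f"
  proof
    assume "p2 \<in> N f"
    then have h: "(q, p2) \<in> conn ends (T - {f})" using Nf by simp
    have "(q, q2) \<in> conn ends (T - {f})" using conn_trans[OF h pq2] .
    then show ?thesis using Nf h by simp
  next
    assume "q2 \<in> N f"
    then have h: "(q, q2) \<in> conn ends (T - {f})" using Nf by simp
    have "(q, p2) \<in> conn ends (T - {f})" using conn_trans[OF h conn_sym[OF pq2]] .
    then show ?thesis using Nf h by simp
  qed
  then show ?thesis using gpq by auto
qed

lemma lamA:
  assumes fT: "f \<in> T" and gT: "g \<in> T" and ff0: "f \<noteq> f0" and gf0: "g \<noteq> f0"
    and fpq: "ends f = {p, q}" and pu: "(p, u) \<in> conn ends (T - {f})"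
    and gpq: "ends g = {p2, q2}" and p2u: "(p2, u) \<in> conn ends (T - {g})"
  shows "N f \<subseteq> N g \<or> N g \<subseteq> N f \<or> N f \<inter> N g = {}"
proof (cases "f = g")
  case True then show ?thesis by simp
next
  case fg: False
  show ?thesis
  proof (cases "ends g \<inter> N f = {}")
    case True
    then show ?thesis using one_side[OF fT gT ff0 gf0 fpq pu gpq p2u] by blast
  next
    case gne: False
    show ?thesis
    proof (cases "ends f \<inter> N g = {}")
      case True
      then show ?thesis using one_side[OF gT fT gf0 ff0 gpq p2u fpq pu] by blast
    next
      case fne: False
      have gin: "ends g \<subseteq> N f" using both_in[OF fT gT ff0 fg fpq pu gpq gne] .
      have fin: "ends f \<subseteq> N g" using both_in[OF gT fT gf0 _ gpq p2u fpq fne] fg by blast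
      have Nf: "N f = {v. (q, v) \<in> conn ends (T - {f})}" using caseA(1)[OF fT ff0 fpq pu] .
      have Ng: "N g = {v. (q2, v) \<in> conn ends (T - {g})}" using caseA(1)[OF gT gf0 gpq p2u] .
      have pq: "(p, q) \<notin> conn ends (T - {f})" using acyclic_cut[OF acyc fT fpq] .
      have pq2: "(p2, q2) \<notin> conn ends (T - {g})" using acyclic_cut[OF acyc gT gpq] .
      have av: "\<forall>v'. (p, v') \<in> conn ends (T - {f}) \<longrightarrow> v' \<notin> ends g"
      proof (intro allI impI)
        fix v' assume pv: "(p, v') \<in> conn ends (T - {f})"
        show "v' \<notin> ends g"
        proof
          assume "v' \<in> ends g"
          then have qv: "(q, v') \<in> conn ends (T - {f})" using gin Nf by auto
          have "(p, q) \<in> conn ends (T - {f})" using conn_trans[OF pv conn_sym[OF qv]] .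
          then show False using pq by simp
        qed
      qed
      have h: "(p, u) \<in> conn ends (T - {f} - {g})" using conn_avoid[OF pu av] .
      have sub: "T - {f} - {g} \<subseteq> T - {g}" by auto
      have puG: "(p, u) \<in> conn ends (T - {g})" using conn_mono[OF sub h] .
      have "p \<in> N g" using fin fpq by auto
      then have q2p: "(q2, p) \<in> conn ends (T - {g})" using Ng by simp
      have p2p: "(p2, p) \<in> conn ends (T - {g})" using conn_trans[OF p2u conn_sym[OF puG]] .
      have "(p2, q2) \<in> conn ends (T - {g})" using conn_trans[OF p2p conn_sym[OF q2p]] .
      then show ?thesis using pq2 by simp
    qed
  qed
qed

lemma typeA_or:
  assumes fT: "f \<in> T"
  shows "(f \<noteq> f0 \<and> (\<exists>p q. ends f = {p, q} \<and> (p, u) \<in> conn ends (T - {f}))) \<or> f = f0 \<or> (N f \<inter> X = {} \<and> N f \<inter> Y = {})"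
proof (cases "f = f0")
  case True then show ?thesis by simp
next
  case ff0: False
  obtain p q where fpq: "ends f = {p, q}" using ends_pair_T[OF fT] by blast
  show ?thesis
  proof (cases "(p, u) \<in> conn ends (T - {f})")
    case True then show ?thesis using ff0 fpq by blast
  next
    case np: False
    show ?thesis
    proof (cases "(q, u) \<in> conn ends (T - {f})")
      case True
      have "ends f = {q, p}" using fpq by (simp add: insert_commute)
      then show ?thesis using ff0 True by blast
    next
      case False
      then show ?thesis using caseB(1,2)[OF fT fpq np False] by blast
    qed
  qed
qed

lemma lam_N:
  assumes fT: "f \<in> T" and gT: "g \<in> T" and Z: "Z = X \<or> Z = Y"
  shows "N f \<inter> Z \<subseteq> N g \<inter> Z \<or> N g \<inter> Z \<subseteq> N f \<inter> Z \<or> N f \<inter> N g \<inter> Z = {}"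
proof -
  have empZ: "N h \<inter> Z = {}" if "N h \<inter> X = {} \<and> N h \<inter> Y = {}" for h using that Z by auto
  have f0Z: "N f0 \<inter> Z = {} \<or> N f0 \<inter> Z = Z" using N_f0 Z XY by auto
  show ?thesis
    using typeA_or[OF fT]
  proof (elim disjE)
    assume fA: "f \<noteq> f0 \<and> (\<exists>p q. ends f = {p, q} \<and> (p, u) \<in> conn ends (T - {f}))"
    then obtain p q where fpq: "ends f = {p, q}" "(p, u) \<in> conn ends (T - {f})" by blast
    show ?thesis
      using typeA_or[OF gT]
    proof (elim disjE)
      assume gA: "g \<noteq> f0 \<and> (\<exists>p q. ends g = {p, q} \<and> (p, u) \<in> conn ends (T - {g}))"
      then obtain p2 q2 where gpq: "ends g = {p2, q2}" "(p2, u) \<in> conn ends (T - {g})" by blast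
      have ff0: "f \<noteq> f0" using fA by simp
      have gf0: "g \<noteq> f0" using gA by simp
      have "N f \<subseteq> N g \<or> N g \<subseteq> N f \<or> N f \<inter> N g = {}"
        using lamA[OF fT gT ff0 gf0 fpq(1) fpq(2) gpq(1) gpq(2)] .
      then show ?thesis by blast
    next
      assume "g = f0" then show ?thesis using f0Z by blast
    next
      assume "N g \<inter> X = {} \<and> N g \<inter> Y = {}" then show ?thesis using empZ by blast
    qed
  next
    assume "f = f0" then show ?thesis using f0Z by blast
  next
    assume "N f \<inter> X = {} \<and> N f \<inter> Y = {}" then show ?thesis using empZ by blast
  qed
qed
end

context fsetup
begin

lemma ends_X: "e \<in> D \<Longrightarrow> \<exists>a. ends e \<inter> X = {a}"
proof -
  assume "e \<in> D"
  then obtain a b where ab: "ends e = {a, b}" "a \<in> X" "b \<in> Y" using D_ends by blast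
  then have "b \<notin> X" using XY by auto
  then show ?thesis using ab by (intro exI[of _ a]) auto
qed

lemma ends_Y: "e \<in> D \<Longrightarrow> \<exists>b. ends e \<inter> Y = {b}"
proof -
  assume "e \<in> D"
  then obtain a b where ab: "ends e = {a, b}" "a \<in> X" "b \<in> Y" using D_ends by blast
  then have "a \<notin> Y" using XY by auto
  then show ?thesis using ab by (intro exI[of _ b]) auto
qed

lemma lam_fam:
  assumes Z: "Z = X \<or> Z = Y" and uniq: "\<And>e. e \<in> D \<Longrightarrow> \<exists>a. ends e \<inter> Z = {a}"
  shows "laminar ((\<lambda>f. {e\<in>D. ends e \<inter> (N f \<inter> Z) \<noteq> {}}) ` T)"
  unfolding laminar_def
proof (intro ballI)
  fix S1 S2 assume S: "S1 \<in> (\<lambda>f. {e\<in>D. ends e \<inter> (N f \<inter> Z) \<noteq> {}}) ` T"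
    "S2 \<in> (\<lambda>f. {e\<in>D. ends e \<inter> (N f \<inter> Z) \<noteq> {}}) ` T"
  then obtain f g where fg: "f \<in> T" "g \<in> T" "S1 = {e\<in>D. ends e \<inter> (N f \<inter> Z) \<noteq> {}}"
    "S2 = {e\<in>D. ends e \<inter> (N g \<inter> Z) \<noteq> {}}" by blast
  have "N f \<inter> Z \<subseteq> N g \<inter> Z \<or> N g \<inter> Z \<subseteq> N f \<inter> Z \<or> N f \<inter> N g \<inter> Z = {}"
    using lam_N[OF fg(1,2) Z] .
  then show "S1 \<subseteq> S2 \<or> S2 \<subseteq> S1 \<or> S1 \<inter> S2 = {}"
  proof (elim disjE)
    assume "N f \<inter> Z \<subseteq> N g \<inter> Z" then have "S1 \<subseteq> S2" using fg(3,4) by blast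
    then show ?thesis by simp
  next
    assume "N g \<inter> Z \<subseteq> N f \<inter> Z" then have "S2 \<subseteq> S1" using fg(3,4) by blast
    then show ?thesis by simp
  next
    assume dis: "N f \<inter> N g \<inter> Z = {}"
    have "S1 \<inter> S2 = {}"
    proof (rule ccontr)
      assume "S1 \<inter> S2 \<noteq> {}"
      then obtain e where e: "e \<in> D" "ends e \<inter> (N f \<inter> Z) \<noteq> {}" "ends e \<inter> (N g \<inter> Z) \<noteq> {}"
        using fg(3,4) by blast
      obtain a where a: "ends e \<inter> Z = {a}" using uniq[OF e(1)] by blast
      obtain x where x: "x \<in> ends e" "x \<in> N f" "x \<in> Z" using e(2) by blast
      then have "x \<in> ends e \<inter> Z" by simp
      then have "x = a" using a by simp
      then have "a \<in> N f" using x by simp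
      obtain y where y: "y \<in> ends e" "y \<in> N g" "y \<in> Z" using e(3) by blast
      then have "y \<in> ends e \<inter> Z" by simp
      then have "y = a" using a by simp
      then have "a \<in> N g" using y by simp
      note this \<open>a \<in> N f\<close>
      moreover have "a \<in> Z" using a by blast
      ultimately show False using dis \<open>a \<in> N f\<close> by blast
    qed
    then show ?thesis by simp
  qed
qed

lemma main_fsetup:
  "\<exists>\<phi> :: 'e \<Rightarrow> nat.
           (\<forall>e \<in> fund_cut V E ends T f0 - {f0}. \<phi> e \<in> {1..9}) \<and>
           (\<forall>f \<in> T. fund_cut V E ends T f \<inter> (fund_cut V E ends T f0 - {f0}) \<noteq> {} \<longrightarrow>
              (\<exists>i \<in> {1..8}. odd (card {e \<in> fund_cut V E ends T f \<inter> (fund_cut V E ends T f0 - {f0}).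
                                          \<phi> e = i})))"
proof -
  define L1 where "L1 = (\<lambda>f. {e\<in>D. ends e \<inter> (N f \<inter> X) \<noteq> {}}) ` T"
  define L2 where "L2 = (\<lambda>f. {e\<in>D. ends e \<inter> (N f \<inter> Y) \<noteq> {}}) ` T"
  have lam1: "laminar L1" unfolding L1_def by (rule lam_fam) (auto intro: ends_X)
  have lam2: "laminar L2" unfolding L2_def by (rule lam_fam) (auto intro: ends_Y)
  have sub1: "\<forall>S\<in>L1. S \<subseteq> D" and sub2: "\<forall>S\<in>L2. S \<subseteq> D" unfolding L1_def L2_def by auto
  obtain phi :: "'e \<Rightarrow> nat" where phi: "\<forall>e\<in>D. phi e \<in> {1..8}"
    "\<forall>S\<in>L1 \<union> L2. S \<noteq> {} \<longrightarrow> (\<exists>i\<in>{1..8}. odd (card {e\<in>S. phi e = i}))"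
    using comb_main[OF finD lam1 lam2 sub1 sub2] by blast
  have Dd: "fund_cut V E ends T f0 - {f0} = D" unfolding D_def ..
  have inL: "fund_cut V E ends T f \<inter> D \<in> L1 \<union> L2" if fT: "f \<in> T" for f
  proof -
    have K: "fund_cut V E ends T f \<inter> D = {e\<in>D. ends e \<inter> N f \<noteq> {}}" using cut_char(1)[OF fT] .
    have XYe: "ends e \<subseteq> X \<union> Y" if eD: "e \<in> D" for e
    proof -
      obtain a b where "ends e = {a, b}" "a \<in> X" "b \<in> Y" using D_ends[OF eD] by blast
      then show ?thesis by auto
    qed
    show ?thesis
      using cut_char(2)[OF fT]
    proof
      assume nY: "N f \<inter> X = {}"
      have "{e\<in>D. ends e \<inter> N f \<noteq> {}} = {e\<in>D. ends e \<inter> (N f \<inter> Y) \<noteq> {}}"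
      proof (intro Collect_cong conj_cong refl)
        fix e assume "e \<in> D"
        then show "ends e \<inter> N f \<noteq> {} \<longleftrightarrow> ends e \<inter> (N f \<inter> Y) \<noteq> {}" using XYe nY by blast
      qed
      then have "fund_cut V E ends T f \<inter> D = (\<lambda>f. {e\<in>D. ends e \<inter> (N f \<inter> Y) \<noteq> {}}) f" using K by simp
      then have "fund_cut V E ends T f \<inter> D \<in> L2" unfolding L2_def using fT by (rule image_eqI)
      then show ?thesis by simp
    next
      assume nY: "N f \<inter> Y = {}"
      have "{e\<in>D. ends e \<inter> N f \<noteq> {}} = {e\<in>D. ends e \<inter> (N f \<inter> X) \<noteq> {}}"
      proof (intro Collect_cong conj_cong refl)
        fix e assume "e \<in> D"
        then show "ends e \<inter> N f \<noteq> {} \<longleftrightarrow> ends e \<inter> (N f \<inter> X) \<noteq> {}" using XYe nY by blast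
      qed
      then have "fund_cut V E ends T f \<inter> D = (\<lambda>f. {e\<in>D. ends e \<inter> (N f \<inter> X) \<noteq> {}}) f" using K by simp
      then have "fund_cut V E ends T f \<inter> D \<in> L1" unfolding L1_def using fT by (rule image_eqI)
      then show ?thesis by simp
    qed
  qed
  show ?thesis
  proof (intro exI[of _ phi] conjI ballI impI)
    fix e assume "e \<in> fund_cut V E ends T f0 - {f0}"
    then show "phi e \<in> {1..9}" using phi(1) Dd by auto
  next
    fix f assume fT: "f \<in> T" and ne: "fund_cut V E ends T f \<inter> (fund_cut V E ends T f0 - {f0}) \<noteq> {}"
    have mem: "fund_cut V E ends T f \<inter> D \<in> L1 \<union> L2" using inL[OF fT] .
    have ne2: "fund_cut V E ends T f \<inter> D \<noteq> {}" using ne Dd by simp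
    have "\<exists>i\<in>{1..8}. odd (card {e \<in> fund_cut V E ends T f \<inter> D. phi e = i})"
      using mem ne2 by (rule phi(2)[rule_format])
    then show "\<exists>i\<in>{1..8}. odd (card {e \<in> fund_cut V E ends T f \<inter> (fund_cut V E ends T f0 - {f0}). phi e = i})"
      unfolding Dd .
  qed
qed

end

theorem lemma5p1:
  fixes V :: "'v set" and E :: "'e set" and ends :: "'e \<Rightarrow> 'v set"
    and T :: "'e set" and f0 :: 'e
  assumes "graph V E ends"
    and "spanning_forest V E ends T"
    and "f0 \<in> T"
  shows "\<exists>\<phi> :: 'e \<Rightarrow> nat.
           (\<forall>e \<in> fund_cut V E ends T f0 - {f0}. \<phi> e \<in> {1..9}) \<and>
           (\<forall>f \<in> T. fund_cut V E ends T f \<inter> (fund_cut V E ends T f0 - {f0}) \<noteq> {} \<longrightarrow>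
              (\<exists>i \<in> {1..8}. odd (card {e \<in> fund_cut V E ends T f \<inter> (fund_cut V E ends T f0 - {f0}).
                                          \<phi> e = i})))"
proof -
  have "f0 \<in> E" using assms(2,3) unfolding spanning_forest_def by auto
  then obtain u w where uw: "ends f0 = {u, w}" using ends_pair[OF assms(1)] by blast
  interpret fsetup V E ends T f0 u w
    using assms uw by unfold_locales auto
  show ?thesis by (rule main_fsetup)
qed

end
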